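(* Let $M_1,M'_1\subset\mathbb C^{N_1}$ be generic real-analytic submanifolds through $0$ of the same dimension. Let $M:=M_1\times\{0\}$ and $M':=M'_1\times\{0\}$, both contained in $\mathbb C^N=\mathbb C^{N_1}\times\mathbb C^{N_2}$, and let $H$ be a $k$-equivalence between $(M,0)$ and $(M',0)$ with $k>1$. Write $Z=(Z^1,Z^2)$ and $H=(H^1,H^2)$ according to this decomposition. Then $H^2(Z^1,0)=O(|Z^1|^k)$, and $Z^1\mapsto H^1(Z^1,0)$ is a $k$-equivalence between $(M_1,0)$ and $(M'_1,0)$.
   Context: A real-analytic submanifold with local defining function $\rho=(\rho^1,\dots,\rho^d)$ is generic if the complex gradients $\rho^j_Z$ are linearly independent at each point. For real-analytic submanifolds $M,M'$ of $\mathbb C^m$ through $0$ of the same dimension and $k>1$, a $k$-equivalence between $(M,0)$ and $(M',0)$ is an invertible formal map $H(Z)=\sum_{|\alpha|\ge1}a_\alpha Z^\alpha$ ($a_\alpha\in\mathbb C^m$, nonzero Jacobian at $0$) with $\rho'(H(Z(x)),\overline{H(Z(x))})=O(|x|^k)$ for some (equivalently any) real-analytic parametrization $x\mapsto Z(x)$ of $M$ near $0=Z(0)$, where $\rho'$ is a local defining function of $M'$. *)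

theory Defs
  imports "HOL-Analysis.Analysis"
begin

section \<open>Real-analytic functions on Euclidean spaces\<close>

text \<open>A real-valued function on a Euclidean space is real-analytic at p if near p it is
  the sum of an (absolutely, i.e. unconditionally) convergent power series in the real
  coordinates (w.r.t. the standard basis) of x - p.  Multi-indices are functions
  Basis -> nat, extended by 0 outside the basis.\<close>

definition real_analytic_at :: "('a::euclidean_space \<Rightarrow> real) \<Rightarrow> 'a \<Rightarrow> bool" where
  "real_analytic_at f p \<longleftrightarrow>
     (\<exists>r>0. \<exists>c :: ('a \<Rightarrow> nat) \<Rightarrow> real. \<forall>x\<in>ball p r.
        ((\<lambda>\<alpha>. c \<alpha> * (\<Prod>b\<in>Basis. ((x - p) \<bullet> b) ^ \<alpha> b)) has_sum f x)
          {\<alpha>. \<forall>b. b \<notin> Basis \<longrightarrow> \<alpha> b = 0})"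

definition real_analytic_on :: "('a::euclidean_space \<Rightarrow> real) \<Rightarrow> 'a set \<Rightarrow> bool" where
  "real_analytic_on f U \<longleftrightarrow> (\<forall>p\<in>U. real_analytic_at f p)"

text \<open>Vector-valued maps: every real coordinate function is real-analytic.\<close>
definition real_analytic_map_on ::
    "('a::euclidean_space \<Rightarrow> 'b::euclidean_space) \<Rightarrow> 'a set \<Rightarrow> bool" where
  "real_analytic_map_on F U \<longleftrightarrow> (\<forall>b\<in>Basis. real_analytic_on (\<lambda>x. F x \<bullet> b) U)"

section \<open>Submanifolds of C^m\<close>

text \<open>Complex gradient  rho_Z = (d rho / d Z_1, ..., d rho / d Z_m) of a real function,
  with d/dZ_l = (d/dx_l - i d/dy_l)/2, Z_l = x_l + i y_l.\<close>
definition cgrad :: "(complex^'m \<Rightarrow> real) \<Rightarrow> complex^'m \<Rightarrow> complex^'m" where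
  "cgrad f Z = (\<chi> l. (complex_of_real (frechet_derivative f (at Z) (axis l 1))
       - \<i> * complex_of_real (frechet_derivative f (at Z) (axis l \<i>))) / 2)"

text \<open>Local defining function of M near 0: real-analytic rho = (rho^1,...,rho^d) on an open
  neighbourhood U of 0 with M \<inter> U = {rho = 0} and d rho^1, ..., d rho^d linearly independent
  (over R) at each point of M \<inter> U.\<close>
definition defining_function_on ::
    "(complex^'m) set \<Rightarrow> (complex^'m \<Rightarrow> real^'d::finite) \<Rightarrow> (complex^'m) set \<Rightarrow> bool" where
  "defining_function_on M \<rho> U \<longleftrightarrow>
     open U \<and> 0 \<in> U \<and> real_analytic_map_on \<rho> U \<and>
     M \<inter> U = {Z\<in>U. \<rho> Z = 0} \<and>
     (\<forall>Z\<in>M \<inter> U. \<forall>c :: 'd \<Rightarrow> real.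
        (\<forall>v. (\<Sum>j\<in>UNIV. c j * frechet_derivative (\<lambda>W. \<rho> W $ j) (at Z) v) = 0)
          \<longrightarrow> (\<forall>j. c j = 0))"

definition local_defining_function :: "(complex^'m) set \<Rightarrow> (complex^'m \<Rightarrow> real^'d::finite) \<Rightarrow> bool" where
  "local_defining_function M \<rho> \<longleftrightarrow> (\<exists>U. defining_function_on M \<rho> U)"

text \<open>Generic real-analytic submanifold of C^m through 0, of real codimension CARD('d)
  (hence of real dimension 2 CARD('m) - CARD('d)).\<close>
definition generic_submanifold :: "'d::finite itself \<Rightarrow> (complex^'m) set \<Rightarrow> bool" where
  "generic_submanifold _ M \<longleftrightarrow> 0 \<in> M \<and>
     (\<exists>(\<rho> :: complex^'m \<Rightarrow> real^'d) U. defining_function_on M \<rho> U \<and>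
        (\<forall>Z\<in>M \<inter> U. \<forall>c :: 'd \<Rightarrow> complex.
           (\<Sum>j\<in>UNIV. c j *s cgrad (\<lambda>W. \<rho> W $ j) Z) = 0 \<longrightarrow> (\<forall>j. c j = 0)))"

text \<open>Real-analytic parametrization of M near 0 = Z(0): a real-analytic immersion of an
  open neighbourhood V of 0 in R^p which is a homeomorphism onto a neighbourhood of 0 in M.\<close>
definition parametrization :: "(complex^'m) set \<Rightarrow> (real^'p \<Rightarrow> complex^'m) \<Rightarrow> bool" where
  "parametrization M Z \<longleftrightarrow> Z 0 = 0 \<and>
     (\<exists>V W. open V \<and> 0 \<in> V \<and> open W \<and> 0 \<in> W \<and> real_analytic_map_on Z V \<and>
        (\<exists>g. homeomorphism V (M \<inter> W) Z g) \<and>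
        (\<forall>x\<in>V. inj (frechet_derivative Z (at x))))"

section \<open>Formal maps and k-equivalences\<close>

text \<open>A formal map H(Z) = sum_alpha a_alpha Z^alpha of C^m is given by its coefficient
  function a :: multi-index => C^m.\<close>
definition monom :: "('m \<Rightarrow> nat) \<Rightarrow> complex^'m \<Rightarrow> complex" where
  "monom \<alpha> Z = (\<Prod>i\<in>UNIV. (Z $ i) ^ \<alpha> i)"

definition unit_mi :: "'m \<Rightarrow> 'm \<Rightarrow> nat" where
  "unit_mi j = (\<lambda>l. if l = j then 1 else 0)"

text \<open>Invertible formal map: no constant term, nonzero Jacobian determinant at 0.\<close>
definition invertible_formal_map :: "(('m::finite \<Rightarrow> nat) \<Rightarrow> complex^'m) \<Rightarrow> bool" where
  "invertible_formal_map a \<longleftrightarrow> a (\<lambda>_. 0) = 0 \<and>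
     det ((\<chi> i j. a (unit_mi j) $ i) :: complex^'m^'m) \<noteq> 0"

text \<open>Truncation of the formal map to terms of total degree < k (a polynomial map).\<close>
definition trunc_map :: "(('m::finite \<Rightarrow> nat) \<Rightarrow> complex^'m) \<Rightarrow> nat \<Rightarrow> complex^'m \<Rightarrow> complex^'m" where
  "trunc_map a k Z = (\<Sum>\<alpha>\<in>{\<alpha>. sum \<alpha> UNIV < k}. monom \<alpha> Z *s a \<alpha>)"

text \<open>f(x) = O(|x|^k) near x = 0.\<close>
definition bigO_pow :: "('a::real_normed_vector \<Rightarrow> 'b::real_normed_vector) \<Rightarrow> nat \<Rightarrow> bool" where
  "bigO_pow f k \<longleftrightarrow> (\<exists>C. \<forall>\<^sub>F x in nhds 0. norm (f x) \<le> C * norm x ^ k)"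

text \<open>k-equivalence between (M,0) and (M',0).  The parameter space of M is R^'p and the
  defining function of M' takes values in R^'e (type arguments).  The condition
  rho'(H(Z(x)), conj H(Z(x))) = O(|x|^k), a statement about the terms of order < k of a formal
  power series in x, only depends on the terms of H of degree < k; it is therefore expressed
  via the polynomial truncation of H, for which the composite is a genuine real-analytic
  function of x.  We use the "for some parametrization / defining function" version.\<close>
definition k_equiv :: "'p::finite itself \<Rightarrow> 'e::finite itself \<Rightarrow> (complex^'m) set \<Rightarrow> (complex^'m) set \<Rightarrow>
    (('m::finite \<Rightarrow> nat) \<Rightarrow> complex^'m) \<Rightarrow> nat \<Rightarrow> bool" where
  "k_equiv _ _ M M' a k \<longleftrightarrow> invertible_formal_map a \<and>
     (\<exists>(Z :: real^'p \<Rightarrow> complex^'m) (\<rho>' :: complex^'m \<Rightarrow> real^'e).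
        parametrization M Z \<and> local_defining_function M' \<rho>' \<and>
        bigO_pow (\<lambda>x. \<rho>' (trunc_map a k (Z x))) k)"

section \<open>Product decomposition C^N = C^N1 x C^N2\<close>

definition emb :: "complex^'a::finite \<Rightarrow> complex^('a + 'b::finite)" where
  "emb z = (\<chi> s. case s of Inl i \<Rightarrow> z $ i | Inr _ \<Rightarrow> 0)"

text \<open>Multi-index in Z^1 only (exponent 0 in Z^2).\<close>
definition ext_mi :: "('a \<Rightarrow> nat) \<Rightarrow> ('a + 'b) \<Rightarrow> nat" where
  "ext_mi \<beta> = (\<lambda>s. case s of Inl i \<Rightarrow> \<beta> i | Inr _ \<Rightarrow> 0)"

end

theory Submission
  imports Defs "HOL-Complex_Analysis.Conformal_Mappings"
begin
definition mono_e :: "('a::euclidean_space \<Rightarrow> nat) \<Rightarrow> 'a \<Rightarrow> real" where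
  "mono_e \<alpha> y = (\<Prod>b\<in>Basis. (y \<bullet> b) ^ \<alpha> b)"

definition deg_e :: "('a::euclidean_space \<Rightarrow> nat) \<Rightarrow> nat" where
  "deg_e \<alpha> = (\<Sum>b\<in>(Basis::'a set). \<alpha> b)"

lemma mono_e_diff:
  fixes y y' :: "'a::euclidean_space" and t :: real
  assumes "norm y \<le> t" "norm y' \<le> t" "0 < t"
  shows "\<bar>mono_e \<alpha> y - mono_e \<alpha> y'\<bar> \<le> deg_e \<alpha> * t ^ (deg_e \<alpha> - 1) * norm (y - y')"
proof (cases "deg_e \<alpha> = 0")
  case True
  then have "\<forall>b\<in>Basis. \<alpha> b = 0" unfolding deg_e_def by simp
  then show ?thesis unfolding mono_e_def using True by simp
next
  case False
  define z where "z b = ((y \<bullet> b) / t) ^ \<alpha> b" for b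
  define w where "w b = ((y' \<bullet> b) / t) ^ \<alpha> b" for b
  have sc: "mono_e \<alpha> x = t ^ deg_e \<alpha> * (\<Prod>b\<in>Basis. ((x \<bullet> b) / t) ^ \<alpha> b)" for x :: 'a
  proof -
    have "t ^ deg_e \<alpha> * (\<Prod>b\<in>Basis. ((x \<bullet> b) / t) ^ \<alpha> b)
        = (\<Prod>b\<in>Basis. t ^ \<alpha> b) * (\<Prod>b\<in>Basis. ((x \<bullet> b) / t) ^ \<alpha> b)"
      unfolding deg_e_def power_sum ..
    also have "\<dots> = (\<Prod>b\<in>Basis. t ^ \<alpha> b * ((x \<bullet> b) / t) ^ \<alpha> b)"
      by (simp add: prod.distrib)
    also have "\<dots> = mono_e \<alpha> x" unfolding mono_e_def
      by (rule prod.cong) (use \<open>0<t\<close> in \<open>auto simp: power_mult_distrib[symmetric]\<close>)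
    finally show ?thesis ..
  qed
  have zb: "norm (z b) \<le> 1" "norm (w b) \<le> 1" if "b \<in> Basis" for b
  proof -
    have "\<bar>y \<bullet> b\<bar> \<le> t" "\<bar>y' \<bullet> b\<bar> \<le> t"
      using Basis_le_norm[OF that] assms by (meson order_trans)+
    then have "\<bar>(y \<bullet> b) / t\<bar> \<le> 1" "\<bar>(y' \<bullet> b) / t\<bar> \<le> 1" using \<open>0<t\<close> by auto
    then show "norm (z b) \<le> 1" "norm (w b) \<le> 1" unfolding z_def w_def
      by (auto simp: power_le_one power_abs)
  qed
  have "norm (prod z Basis - prod w Basis) \<le> (\<Sum>b\<in>Basis. norm (z b - w b))"
    by (rule norm_prod_diff) (use zb in auto)
  also have "\<dots> \<le> (\<Sum>b\<in>Basis. \<alpha> b * (norm (y - y') / t))"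
  proof (rule sum_mono)
    fix b :: 'a assume b: "b \<in> Basis"
    have "norm (z b - w b) \<le> \<alpha> b * norm ((y \<bullet> b) / t - (y' \<bullet> b) / t)"
      unfolding z_def w_def
    proof (rule norm_power_diff)
      have "\<bar>y \<bullet> b\<bar> \<le> t" "\<bar>y' \<bullet> b\<bar> \<le> t"
        using Basis_le_norm[OF b] assms by (meson order_trans)+
      then show "norm ((y \<bullet> b) / t) \<le> 1" "norm ((y' \<bullet> b) / t) \<le> 1" using \<open>0<t\<close> by auto
    qed
    also have "norm ((y \<bullet> b) / t - (y' \<bullet> b) / t) = \<bar>(y - y') \<bullet> b\<bar> / t"
      using \<open>0<t\<close> by (simp add: inner_diff_left diff_divide_distrib[symmetric])
    also have "\<dots> \<le> norm (y - y') / t"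
      using Basis_le_norm[OF b] \<open>0<t\<close> by (simp add: divide_right_mono)
    finally show "norm (z b - w b) \<le> \<alpha> b * (norm (y - y') / t)"
      by (simp add: mult_left_mono order_trans)
  qed
  also have "\<dots> = deg_e \<alpha> * (norm (y - y') / t)"
    unfolding deg_e_def by (simp add: sum_distrib_right sum_divide_distrib)
  finally have *: "\<bar>prod z Basis - prod w Basis\<bar> \<le> deg_e \<alpha> * (norm (y - y') / t)" by simp
  have "\<bar>mono_e \<alpha> y - mono_e \<alpha> y'\<bar> = t ^ deg_e \<alpha> * \<bar>prod z Basis - prod w Basis\<bar>"
    unfolding sc z_def w_def using \<open>0<t\<close> by (simp add: right_diff_distrib[symmetric] abs_mult)
  also have "\<dots> \<le> t ^ deg_e \<alpha> * (deg_e \<alpha> * (norm (y - y') / t))"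
    using mult_left_mono[OF *, of "t ^ deg_e \<alpha>"] \<open>0<t\<close> by simp
  also have "\<dots> = deg_e \<alpha> * t ^ (deg_e \<alpha> - 1) * norm (y - y')"
  proof -
    obtain n where n: "deg_e \<alpha> = Suc n" using False not0_implies_Suc by blast
    show ?thesis using \<open>0<t\<close> unfolding n by (simp add: field_simps)
  qed
  finally show ?thesis .
qed

lemma deg_bound:
  fixes s t :: real
  assumes "0 < s" "0 < t" "t \<le> s / 2" "2 \<le> n"
  shows "n * t ^ (n - 1) \<le> (4 / s^2) * s ^ n * t"
proof -
  obtain m where n: "n = m + 2" using assms(4) by (metis add.commute le_Suc_ex)
  have "t ^ m \<le> (s/2) ^ m" using assms by (intro power_mono) auto
  also have "\<dots> = s ^ m / 2 ^ m" by (simp add: power_divide)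
  finally have tm: "t ^ m \<le> s ^ m / 2 ^ m" .
  have m2: "real (m + 2) \<le> 4 * 2 ^ m"
  proof -
    have "m + 2 < 2 ^ (m + 2)" by (rule less_exp)
    then have "real (m + 2) \<le> 2 ^ (m+2)" by (metis less_imp_le of_nat_less_numeral_power_cancel_iff
          of_nat_le_iff of_nat_numeral of_nat_power)
    then show ?thesis by simp
  qed
  have "n * t ^ (n - 1) = real (m+2) * t ^ m * t" unfolding n by simp
  also have "\<dots> \<le> real (m+2) * (s ^ m / 2 ^ m) * t"
    using tm assms by (intro mult_right_mono mult_left_mono) auto
  also have "\<dots> \<le> (4 * 2 ^ m) * (s ^ m / 2 ^ m) * t"
    using m2 assms by (intro mult_right_mono) (auto intro!: divide_nonneg_nonneg)
  also have "\<dots> = (4 / s^2) * s ^ n * t" unfolding n using assms by (simp add: field_simps power_add power2_eq_square)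
  finally show ?thesis .
qed

definition dl :: "'a \<Rightarrow> 'a \<Rightarrow> nat" where "dl b = (\<lambda>b'. if b' = b then 1 else 0)"

lemma mono_e_dl: "b \<in> Basis \<Longrightarrow> mono_e (dl b) y = y \<bullet> b"
proof -
  assume b: "b \<in> Basis"
  have e: "(\<lambda>b'. (y \<bullet> b') ^ dl b b') = (\<lambda>b'. if b' = b then y \<bullet> b' else 1)"
    by (auto simp: dl_def)
  have "mono_e (dl b) y = (\<Prod>b'\<in>Basis. if b' = b then y \<bullet> b' else 1)"
    unfolding mono_e_def e ..
  also have "\<dots> = y \<bullet> b" using b by (subst prod.delta) auto
  finally show ?thesis .
qed

lemma analytic_strict:
  fixes f :: "'a::euclidean_space \<Rightarrow> real"
  assumes "real_analytic_at f p"
  shows "\<exists>L K \<delta>. linear L \<and> 0 < \<delta> \<and> 0 \<le> K \<and> (\<forall>t u v. 0 < t \<longrightarrow> t \<le> \<delta> \<longrightarrow>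
     norm (u - p) \<le> t \<longrightarrow> norm (v - p) \<le> t \<longrightarrow> \<bar>f u - f v - L (u - v)\<bar> \<le> K * t * norm (u - v))"
proof -
  define MI where "MI = {\<alpha>::'a\<Rightarrow>nat. \<forall>b. b \<notin> Basis \<longrightarrow> \<alpha> b = 0}"
  obtain r c where r: "r > 0" and hs: "\<And>x. x \<in> ball p r \<Longrightarrow>
      ((\<lambda>\<alpha>. c \<alpha> * mono_e \<alpha> (x - p)) has_sum f x) MI"
    using assms unfolding real_analytic_at_def mono_e_def MI_def by blast
  define s where "s = r / (2 * DIM('a))"
  have s: "s > 0" using r by (simp add: s_def)
  define x0 where "x0 = p + s *\<^sub>R (\<Sum>b\<in>Basis. b)"
  have "norm (x0 - p) = s * norm (\<Sum>b\<in>(Basis::'a set). b)" using s by (simp add: x0_def)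
  also have "\<dots> \<le> s * (\<Sum>b\<in>(Basis::'a set). norm b)" using s by (intro mult_left_mono norm_sum) auto
  also have "\<dots> = s * DIM('a)" by simp
  also have "\<dots> < r" using r by (simp add: s_def)
  finally have "x0 \<in> ball p r" by (simp add: dist_norm norm_minus_commute)
  moreover have "(x0 - p) \<bullet> b = s" if "b \<in> Basis" for b
    using that by (simp add: x0_def inner_sum_left inner_Basis sum.delta)
  then have "mono_e \<alpha> (x0 - p) = s ^ deg_e \<alpha>" for \<alpha>
    by (simp add: mono_e_def deg_e_def power_sum)
  ultimately have "((\<lambda>\<alpha>. c \<alpha> * s ^ deg_e \<alpha>) has_sum f x0) MI" using hs by fastforce
  then have "(\<lambda>\<alpha>. c \<alpha> * s ^ deg_e \<alpha>) summable_on MI" by (auto simp: summable_on_def)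
  then have "(\<lambda>\<alpha>. norm (c \<alpha> * s ^ deg_e \<alpha>)) summable_on MI"
    by (rule summable_on_iff_abs_summable_on_real[THEN iffD1])
  then have "(\<lambda>\<alpha>. \<bar>c \<alpha> * s ^ deg_e \<alpha>\<bar>) summable_on MI" by simp
  moreover define h where "h \<alpha> = \<bar>c \<alpha>\<bar> * s ^ deg_e \<alpha>" for \<alpha>
  moreover have "h = (\<lambda>\<alpha>. \<bar>c \<alpha> * s ^ deg_e \<alpha>\<bar>)" using s by (auto simp: h_def abs_mult fun_eq_iff)
  ultimately have hsum: "h summable_on MI" by simp
  define D1 where "D1 = dl ` (Basis::'a set)"
  have D1MI: "D1 \<subseteq> MI" by (auto simp: D1_def MI_def dl_def)
  have hsum': "h summable_on (MI - D1)" by (rule summable_on_subset_banach[OF hsum]) auto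
  define S' where "S' = infsum h (MI - D1)"
  have S'0: "S' \<ge> 0" unfolding S'_def by (rule infsum_nonneg) (use s in \<open>auto simp: h_def\<close>)
  define L where "L y = (\<Sum>b\<in>Basis. c (dl b) * (y \<bullet> b))" for y :: 'a
  have linL: "linear L"
    by (rule linearI) (simp_all add: L_def inner_add_left algebra_simps sum.distrib sum_distrib_left)
  have injdl: "inj_on dl (Basis::'a set)"
  proof
    fix b b' :: 'a assume "dl b = dl b'"
    then have "dl b b = dl b' b" by simp
    then show "b = b'" by (auto simp: dl_def split: if_splits)
  qed
  define K where "K = 4 / s^2 * S'"
  have main: "\<bar>f u - f v - L (u - v)\<bar> \<le> K * t * norm (u - v)"
    if t: "0 < t" "t \<le> s / 2" and u: "norm (u - p) \<le> t" and v: "norm (v - p) \<le> t" for t u v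
  proof -
    have d: "real DIM('a) \<ge> 1" using DIM_positive[where 'a='a] by linarith
    have d4: "1 < real DIM('a) * 4" using d by linarith
    have "s / 2 < r" using r d4 by (simp add: s_def field_simps)
    then have uv: "u \<in> ball p r" "v \<in> ball p r" using t u v
      by (auto simp: dist_norm norm_minus_commute)
    define G where "G \<alpha> = c \<alpha> * (mono_e \<alpha> (u - p) - mono_e \<alpha> (v - p))" for \<alpha>
    have "((\<lambda>\<alpha>. c \<alpha> * mono_e \<alpha> (u - p) + - (c \<alpha> * mono_e \<alpha> (v - p))) has_sum (f u + - f v)) MI"
      by (intro has_sum_add has_sum_uminusI hs uv)
    moreover have "G = (\<lambda>\<alpha>. c \<alpha> * mono_e \<alpha> (u - p) + - (c \<alpha> * mono_e \<alpha> (v - p)))"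
      by (auto simp: G_def algebra_simps fun_eq_iff)
    ultimately have G1: "(G has_sum (f u - f v)) MI" by simp
    have "sum G D1 = (\<Sum>b\<in>Basis. G (dl b))" unfolding D1_def by (rule sum.reindex[OF injdl, unfolded comp_def])
    also have "\<dots> = L (u - v)" unfolding L_def G_def
      by (rule sum.cong) (simp_all add: mono_e_dl inner_diff_left)
    finally have G2: "(G has_sum L (u - v)) D1" using has_sum_finite[of D1 G] by (simp add: D1_def)
    have G3: "(G has_sum (f u - f v - L (u - v))) (MI - D1)" by (rule has_sum_Diff[OF G1 G2 D1MI])
    define Bc where "Bc = 4 / s^2 * t * norm (u - v)"
    have Bc0: "Bc \<ge> 0" using t by (simp add: Bc_def)
    have bnd: "\<bar>G \<alpha>\<bar> \<le> Bc * h \<alpha>" if \<alpha>: "\<alpha> \<in> MI - D1" for \<alpha>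
    proof -
      consider "deg_e \<alpha> = 0" | "deg_e \<alpha> = 1" | "2 \<le> deg_e \<alpha>" by linarith
      then show ?thesis
      proof cases
        case 1
        then have "\<forall>b\<in>Basis. \<alpha> b = 0" unfolding deg_e_def by simp
        then have "G \<alpha> = 0" by (simp add: G_def mono_e_def)
        then show ?thesis using Bc0 s by (simp add: h_def)
      next
        case 2
        then obtain b where b: "b \<in> Basis" "\<alpha> b = 1" "\<forall>b'\<in>Basis. b \<noteq> b' \<longrightarrow> \<alpha> b' = 0"
          unfolding deg_e_def using sum_eq_Suc0_iff[of "Basis::'a set" \<alpha>] by auto
        have "\<alpha> = dl b"
        proof
          fix b' show "\<alpha> b' = dl b b'" using b \<alpha> by (cases "b' \<in> Basis") (auto simp: dl_def MI_def)
        qed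
        then have False using \<alpha> b by (auto simp: D1_def)
        then show ?thesis ..
      next
        case 3
        have "\<bar>G \<alpha>\<bar> = \<bar>c \<alpha>\<bar> * \<bar>mono_e \<alpha> (u - p) - mono_e \<alpha> (v - p)\<bar>" by (simp add: G_def abs_mult)
        also have "\<dots> \<le> \<bar>c \<alpha>\<bar> * (deg_e \<alpha> * t ^ (deg_e \<alpha> - 1) * norm ((u - p) - (v - p)))"
          by (intro mult_left_mono mono_e_diff u v t) auto
        also have "\<dots> \<le> \<bar>c \<alpha>\<bar> * ((4 / s^2) * s ^ deg_e \<alpha> * t * norm (u - v))"
          using mult_right_mono[OF deg_bound[OF s t 3], of "norm (u - v)"]
          by (intro mult_left_mono) (auto simp: mult.assoc)
        also have "\<dots> = Bc * h \<alpha>" by (simp add: Bc_def h_def)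
        finally show ?thesis .
      qed
    qed
    have hB: "((\<lambda>\<alpha>. Bc * h \<alpha>) has_sum Bc * S') (MI - D1)"
      unfolding S'_def by (intro has_sum_cmult_right has_sum_infsum hsum')
    have "f u - f v - L (u - v) \<le> Bc * S'"
      by (rule has_sum_mono[OF G3 hB]) (use bnd in force)
    moreover have "- (f u - f v - L (u - v)) \<le> Bc * S'"
      by (rule has_sum_mono[OF has_sum_uminusI[OF G3] hB]) (use bnd in force)
    moreover have "Bc * S' = K * t * norm (u - v)" by (simp add: Bc_def K_def)
    ultimately show ?thesis by linarith
  qed
  have "0 \<le> K" using S'0 by (simp add: K_def)
  then show ?thesis using linL s main by (intro exI[of _ L] exI[of _ K] exI[of _ "s/2"]) auto
qed

lemma analytic_map_strict:
  fixes F :: "'a::euclidean_space \<Rightarrow> 'b::euclidean_space"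
  assumes "real_analytic_map_on F U" "p \<in> U"
  shows "\<exists>L K \<delta>. linear L \<and> 0 < \<delta> \<and> 0 \<le> K \<and> (\<forall>t u v. 0 < t \<longrightarrow> t \<le> \<delta> \<longrightarrow>
     norm (u - p) \<le> t \<longrightarrow> norm (v - p) \<le> t \<longrightarrow> norm (F u - F v - L (u - v)) \<le> K * t * norm (u - v))"
proof -
  have "\<forall>b\<in>Basis. \<exists>L K \<delta>. linear L \<and> 0 < \<delta> \<and> 0 \<le> K \<and> (\<forall>t u v. 0 < t \<longrightarrow> t \<le> \<delta> \<longrightarrow>
     norm (u - p) \<le> t \<longrightarrow> norm (v - p) \<le> t \<longrightarrow> \<bar>F u \<bullet> b - F v \<bullet> b - L (u - v)\<bar> \<le> K * t * norm (u - v))"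
  proof
    fix b :: 'b assume "b \<in> Basis"
    then have "real_analytic_at (\<lambda>x. F x \<bullet> b) p"
      using assms by (auto simp: real_analytic_map_on_def real_analytic_on_def)
    from analytic_strict[OF this] show "\<exists>L K \<delta>. linear L \<and> 0 < \<delta> \<and> 0 \<le> K \<and> (\<forall>t u v. 0 < t \<longrightarrow> t \<le> \<delta> \<longrightarrow>
     norm (u - p) \<le> t \<longrightarrow> norm (v - p) \<le> t \<longrightarrow> \<bar>F u \<bullet> b - F v \<bullet> b - L (u - v)\<bar> \<le> K * t * norm (u - v))"
      by simp
  qed
  then obtain Lf Kf df where H: "\<And>b. b \<in> Basis \<Longrightarrow> linear (Lf b) \<and> 0 < df b \<and> 0 \<le> Kf b \<and> (\<forall>t u v. 0 < t \<longrightarrow> t \<le> df b \<longrightarrow>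
     norm (u - p) \<le> t \<longrightarrow> norm (v - p) \<le> t \<longrightarrow> \<bar>F u \<bullet> b - F v \<bullet> b - Lf b (u - v)\<bar> \<le> Kf b * t * norm (u - v))"
    by metis
  define L where "L x = (\<Sum>b\<in>Basis. Lf b x *\<^sub>R b)" for x
  define K where "K = (\<Sum>b\<in>(Basis::'b set). Kf b)"
  define \<delta> where "\<delta> = Min (df ` (Basis::'b set))"
  have linL: "linear L" unfolding L_def
    unfolding linear_conv_bounded_linear
    by (intro bounded_linear_sum bounded_linear_scaleR_const) (use H in \<open>auto simp: linear_conv_bounded_linear\<close>)
  have d0: "0 < \<delta>" unfolding \<delta>_def using H by (subst Min_gr_iff) auto
  have K0: "0 \<le> K" unfolding K_def using H by (intro sum_nonneg) auto
  have "norm (F u - F v - L (u - v)) \<le> K * t * norm (u - v)"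
    if t: "0 < t" "t \<le> \<delta>" and u: "norm (u - p) \<le> t" and v: "norm (v - p) \<le> t" for t u v
  proof -
    have "F u - F v - L (u - v) = (\<Sum>b\<in>Basis. (F u \<bullet> b - F v \<bullet> b - Lf b (u - v)) *\<^sub>R b)"
    proof -
      have "(\<Sum>b\<in>Basis. (F u \<bullet> b - F v \<bullet> b - Lf b (u - v)) *\<^sub>R b) =
          (\<Sum>b\<in>Basis. (F u \<bullet> b) *\<^sub>R b) - (\<Sum>b\<in>Basis. (F v \<bullet> b) *\<^sub>R b) - (\<Sum>b\<in>Basis. Lf b (u - v) *\<^sub>R b)"
        by (simp add: scaleR_diff_left sum_subtractf)
      then show ?thesis by (simp add: euclidean_representation L_def)
    qed
    also have "norm \<dots> \<le> (\<Sum>b\<in>Basis. norm ((F u \<bullet> b - F v \<bullet> b - Lf b (u - v)) *\<^sub>R b))"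
      by (rule norm_sum)
    also have "\<dots> \<le> (\<Sum>b\<in>Basis. Kf b * t * norm (u - v))"
    proof (rule sum_mono)
      fix b :: 'b assume b: "b \<in> Basis"
      have "t \<le> df b" using t b unfolding \<delta>_def by (meson Min_le finite_Basis finite_imageI imageI order_trans)
      then show "norm ((F u \<bullet> b - F v \<bullet> b - Lf b (u - v)) *\<^sub>R b) \<le> Kf b * t * norm (u - v)"
        using H[OF b] t u v b by auto
    qed
    also have "\<dots> = K * t * norm (u - v)" by (simp add: K_def sum_distrib_right)
    finally show ?thesis .
  qed
  then show ?thesis using linL d0 K0 by blast
qed

lemma strict_imp_deriv:
  fixes F :: "'a::euclidean_space \<Rightarrow> 'b::euclidean_space"
  assumes "linear L" "0 < \<delta>" "0 \<le> K" and S: "\<forall>t u v. 0 < t \<longrightarrow> t \<le> \<delta> \<longrightarrow>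
     norm (u - p) \<le> t \<longrightarrow> norm (v - p) \<le> t \<longrightarrow> norm (F u - F v - L (u - v)) \<le> K * t * norm (u - v)"
  shows "(F has_derivative L) (at p)"
  unfolding has_derivative_at_alt
proof (intro conjI allI impI)
  show "bounded_linear L" using assms linear_conv_bounded_linear by auto
  fix e :: real assume e: "0 < e"
  show "\<exists>d>0. \<forall>y. norm (y - p) < d \<longrightarrow> norm (F y - F p - L (y - p)) \<le> e * norm (y - p)"
  proof (intro exI[of _ "min \<delta> (e / (K + 1))"] conjI allI impI)
    show "0 < min \<delta> (e / (K + 1))" using assms e by auto
    fix y assume y: "norm (y - p) < min \<delta> (e / (K + 1))"
    show "norm (F y - F p - L (y - p)) \<le> e * norm (y - p)"
    proof (cases "y = p")
      case True then show ?thesis using \<open>linear L\<close> by (simp add: linear_0)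
    next
      case False
      then have t: "0 < norm (y - p)" by simp
      have "norm (F y - F p - L (y - p)) \<le> K * norm (y - p) * norm (y - p)"
        using S t y by auto
      also have "\<dots> \<le> e * norm (y - p)"
      proof (intro mult_right_mono)
        have "K * norm (y - p) \<le> K * (e / (K + 1))" using y assms by (intro mult_left_mono) auto
        also have "\<dots> \<le> e" using assms e by (simp add: field_simps)
        finally show "K * norm (y - p) \<le> e" .
      qed auto
      finally show ?thesis .
    qed
  qed
qed

lemma strict_lipschitz:
  fixes F :: "'a::euclidean_space \<Rightarrow> 'b::euclidean_space"
  assumes "linear L" "0 < \<delta>" "0 \<le> K" and S: "\<forall>t u v. 0 < t \<longrightarrow> t \<le> \<delta> \<longrightarrow>
     norm (u - p) \<le> t \<longrightarrow> norm (v - p) \<le> t \<longrightarrow> norm (F u - F v - L (u - v)) \<le> K * t * norm (u - v)"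
  shows "\<exists>C. \<forall>u v. norm (u - p) \<le> \<delta> \<longrightarrow> norm (v - p) \<le> \<delta> \<longrightarrow> norm (F u - F v) \<le> C * norm (u - v)"
proof -
  obtain B where B: "\<And>x. norm (L x) \<le> B * norm x" using linear_bounded[OF assms(1)] by blast
  have "norm (F u - F v) \<le> (B + K * \<delta>) * norm (u - v)"
    if "norm (u - p) \<le> \<delta>" "norm (v - p) \<le> \<delta>" for u v
  proof -
    have "norm (F u - F v) \<le> norm (F u - F v - L (u - v)) + norm (L (u - v))"
      using norm_triangle_sub[of "F u - F v" "L (u - v)"] by linarith
    also have "\<dots> \<le> K * \<delta> * norm (u - v) + B * norm (u - v)"
      using S that assms B by (intro add_mono) auto
    finally show ?thesis by (simp add: algebra_simps)
  qed
  then show ?thesis by blast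
qed

lemma metric_regularity:
  fixes F :: "'a::euclidean_space \<Rightarrow> 'e::euclidean_space"
  assumes linD: "linear D" and surjD: "surj D" and F0: "F 0 = 0" and d0: "0 < \<delta>" and K0: "0 \<le> K"
    and S: "\<forall>t u v. 0 < t \<longrightarrow> t \<le> \<delta> \<longrightarrow>
     norm (u - 0) \<le> t \<longrightarrow> norm (v - 0) \<le> t \<longrightarrow> norm (F u - F v - D (u - v)) \<le> K * t * norm (u - v)"
  shows "\<exists>C. \<forall>\<epsilon>>0. \<exists>\<eta>>0. \<forall>w. norm w < \<eta> \<longrightarrow>
           (\<exists>m. F m = 0 \<and> norm (m - w) \<le> C * norm (F w) \<and> norm m < \<epsilon>)"
proof -
  obtain R where linR: "linear R" and DR: "D \<circ> R = id"
    using real_vector.linear_surjective_right_inverse[OF linD surjD] by blast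
  have DRy: "D (R y) = y" for y using DR by (metis comp_apply id_apply)
  obtain B where B0: "0 < B" and B: "\<And>x. norm (R x) \<le> B * norm x" using linear_bounded_pos[OF linR] by blast
  obtain BD where BD0: "0 < BD" and BD: "\<And>x. norm (D x) \<le> BD * norm x" using linear_bounded_pos[OF linD] by blast
  have "\<exists>\<eta>>0. \<forall>w. norm w < \<eta> \<longrightarrow> (\<exists>m. F m = 0 \<and> norm (m - w) \<le> (2 * B) * norm (F w) \<and> norm m < \<epsilon>)"
    if e: "\<epsilon> > 0" for \<epsilon>
  proof -
    define t where "t = min (min \<delta> (\<epsilon> / 2)) (1 / (2 * (K + 1) * B))"
    have t0: "0 < t" using d0 e B0 K0 by (simp add: t_def)
    have td: "t \<le> \<delta>" by (simp add: t_def)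
    have tKB: "K * t * B \<le> 1 / 2"
    proof -
      have X: "0 < 2 * (K + 1) * B" using K0 B0 by simp
      have "t \<le> 1 / (2 * (K + 1) * B)" by (simp add: t_def)
      then have "t * (2 * (K + 1) * B) \<le> 1" using X by (simp add: le_divide_eq)
      moreover have "K * t * B \<le> (K + 1) * t * B" using t0 B0 by (simp add: mult_right_mono)
      moreover have "(K + 1) * t * B = t * (2 * (K + 1) * B) / 2" by (simp add: algebra_simps)
      ultimately show ?thesis by linarith
    qed
    have Fw: "norm (F w) \<le> (K * t + BD) * norm w" if "norm w \<le> t" for w
    proof (cases "w = 0")
      case True then show ?thesis using F0 by simp
    next
      case False
      have "norm (F w - F 0 - D (w - 0)) \<le> K * t * norm (w - 0)"
        using S[rule_format, OF t0 td, of w 0] that t0 by simp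
      then have "norm (F w - D w) \<le> K * t * norm w" using F0 by simp
      then have "norm (F w) \<le> K * t * norm w + norm (D w)" using norm_triangle_sub[of "F w" "D w"] by linarith
      then show ?thesis using BD[of w] by (simp add: algebra_simps)
    qed
    define \<eta> where "\<eta> = min (t / 2) (t / (4 * B * (K * t + BD + 1)))"
    have "0 < K * t + BD + 1" using t0 K0 BD0 by (simp add: add_nonneg_pos)
    then have eta0: "0 < \<eta>" using t0 B0 by (simp add: \<eta>_def)
    have "\<exists>m. F m = 0 \<and> norm (m - w) \<le> (2 * B) * norm (F w) \<and> norm m < \<epsilon>" if w: "norm w < \<eta>" for w
    proof -
      have wt: "norm w \<le> t / 2" using w by (simp add: \<eta>_def)
      have "norm (F w) \<le> (K * t + BD) * norm w" using Fw wt t0 by simp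
      also have "\<dots> \<le> (K * t + BD + 1) * (t / (4 * B * (K * t + BD + 1)))"
        using w t0 K0 BD0 by (intro mult_mono) (auto simp: \<eta>_def)
      also have "\<dots> = t / (4 * B)"
      proof -
        have "c * (t / (4 * B * c)) = t / (4 * B)" if "c > 0" for c using that B0 by (simp add: field_simps)
        moreover have "0 < K * t + BD + 1" using t0 K0 BD0 by (simp add: add_nonneg_pos)
        ultimately show ?thesis by blast
      qed
      finally have Fwt: "norm (F w) \<le> t / (4 * B)" .
      define r where "r = 2 * norm (F w)"
      define G where "G y = y - F (w + R y)" for y
      have inreg: "norm (w + R y) \<le> t" if "y \<in> cball 0 r" for y
      proof -
        have "norm (w + R y) \<le> norm w + B * norm y" using B[of y] norm_triangle_ineq[of w "R y"] by linarith
        also have "\<dots> \<le> t / 2 + B * r" using wt that B0 by (intro add_mono mult_left_mono) auto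
        also have "\<dots> \<le> t / 2 + B * (t / (2 * B))" using Fwt B0 by (intro add_mono mult_left_mono) (auto simp: r_def field_simps)
        also have "\<dots> = t" using B0 by simp
        finally show ?thesis .
      qed
      have lip: "dist (G y) (G y') \<le> (1/2) * dist y y'" if "y \<in> cball 0 r" "y' \<in> cball 0 r" for y y'
      proof -
        have "G y - G y' = - (F (w + R y) - F (w + R y') - D ((w + R y) - (w + R y')))"
          using linD linR by (simp add: G_def linear_diff DRy algebra_simps)
        then have "dist (G y) (G y') = norm (F (w + R y) - F (w + R y') - D ((w + R y) - (w + R y')))"
          unfolding dist_norm by (metis norm_minus_cancel)
        also have "\<dots> \<le> K * t * norm ((w + R y) - (w + R y'))"
          using S[rule_format, OF t0 td, of "w + R y" "w + R y'"] inreg[OF that(1)] inreg[OF that(2)] by simp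
        also have "norm ((w + R y) - (w + R y')) = norm (R (y - y'))" using linR by (simp add: linear_diff)
        also have "K * t * norm (R (y - y')) \<le> K * t * (B * norm (y - y'))"
          using K0 t0 B by (intro mult_left_mono) auto
        also have "\<dots> = (K * t * B) * dist y y'" by (simp add: dist_norm)
        also have "\<dots> \<le> (1/2) * dist y y'" using tKB by (intro mult_right_mono) auto
        finally show ?thesis .
      qed
      have G0: "G 0 = - F w" using linR by (simp add: G_def linear_0)
      have maps: "G ` cball 0 r \<subseteq> cball 0 r"
      proof
        fix z assume "z \<in> G ` cball 0 r"
        then obtain y where y: "y \<in> cball 0 r" "z = G y" by blast
        have "norm (G y) \<le> dist (G y) (G 0) + norm (G 0)" using norm_triangle_sub[of "G y" "G 0"] by (simp add: dist_norm add.commute)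
        also have "\<dots> \<le> (1/2) * dist y 0 + norm (F w)"
          using lip[OF y(1), of 0] G0 y by (auto simp: r_def)
        also have "\<dots> \<le> r" using y by (simp add: r_def)
        finally show "z \<in> cball 0 r" using y by simp
      qed
      obtain y where y: "y \<in> cball 0 r" "G y = y"
        using Banach_fix[of "cball 0 r" "1/2" G] maps lip
        by (auto simp: complete_eq_closed r_def)
      define m where "m = w + R y"
      have "F m = 0" using y(2) by (simp add: G_def m_def)
      moreover have "norm (m - w) \<le> (2 * B) * norm (F w)"
      proof -
        have "norm (m - w) = norm (R y)" by (simp add: m_def)
        also have "\<dots> \<le> B * norm y" by (rule B)
        also have "\<dots> \<le> B * r" using y(1) B0 by (intro mult_left_mono) auto
        finally show ?thesis by (simp add: r_def)
      qed
      moreover have "norm m < \<epsilon>" using inreg[OF y(1)] t0 e by (simp add: m_def t_def)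
      ultimately show ?thesis by blast
    qed
    then show ?thesis using eta0 by blast
  qed
  then show ?thesis by blast
qed

lemma finite_mi_le: "finite {\<beta>::'a::finite\<Rightarrow>nat. sum \<beta> UNIV \<le> k}"
proof -
  have "{\<beta>::'a\<Rightarrow>nat. sum \<beta> UNIV \<le> k} \<subseteq> PiE UNIV (\<lambda>_. {..k})"
  proof
    fix \<beta> :: "'a \<Rightarrow> nat" assume "\<beta> \<in> {\<beta>. sum \<beta> UNIV \<le> k}"
    then have "\<beta> i \<le> k" for i using member_le_sum[of i UNIV \<beta>] by auto
    then show "\<beta> \<in> PiE UNIV (\<lambda>_. {..k})" by (auto simp: PiE_def extensional_def)
  qed
  moreover have "finite (PiE (UNIV::'a set) (\<lambda>_. {..k}))" by (intro finite_PiE) auto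
  ultimately show ?thesis by (rule finite_subset)
qed

lemma finite_mi_less: "finite {\<beta>::'a::finite\<Rightarrow>nat. sum \<beta> UNIV < k}"
  by (rule finite_subset[OF _ finite_mi_le[of k]]) auto

lemma finite_mi_eq: "finite {\<beta>::'a::finite\<Rightarrow>nat. sum \<beta> UNIV = k}"
  by (rule finite_subset[OF _ finite_mi_le[of k]]) auto

lemma univ_poly_zero:
  fixes A :: "nat \<Rightarrow> complex"
  assumes "finite N" "\<And>w. (\<Sum>n\<in>N. A n * w ^ n) = 0" "n \<in> N"
  shows "A n = 0"
proof -
  define c where "c i = (if i \<in> N then A i else 0)" for i
  have "(\<Sum>i\<le>Max N. c i * w ^ i) = 0" for w
  proof -
    have "(\<Sum>i\<le>Max N. c i * w ^ i) = (\<Sum>i\<in>N. c i * w ^ i)"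
      by (rule sum.mono_neutral_right) (use assms in \<open>auto simp: c_def\<close>)
    also have "\<dots> = (\<Sum>i\<in>N. A i * w ^ i)" by (simp add: c_def)
    finally show ?thesis using assms(2) by simp
  qed
  from zero_polynom_imp_zero_coeffs[OF this, of n] have "c n = 0" using assms by auto
  then show ?thesis using assms by (simp add: c_def)
qed

lemma multi_poly_zero_aux:
  fixes I :: "'a set"
  assumes "finite I"
  shows "\<forall>S (c :: ('a \<Rightarrow> nat) \<Rightarrow> complex). finite S \<longrightarrow> (\<forall>\<beta>\<in>S. \<forall>i. i \<notin> I \<longrightarrow> \<beta> i = 0) \<longrightarrow>
    (\<forall>z::'a \<Rightarrow> complex. (\<Sum>\<beta>\<in>S. c \<beta> * (\<Prod>i\<in>I. z i ^ \<beta> i)) = 0) \<longrightarrow> (\<forall>\<beta>\<in>S. c \<beta> = 0)"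
  using assms
proof (induction I rule: finite_induct)
  case empty
  show ?case
  proof (intro allI impI ballI)
    fix S and c :: "('a \<Rightarrow> nat) \<Rightarrow> complex" and \<beta>
    assume S: "finite S" "\<forall>\<beta>\<in>S. \<forall>i. i \<notin> {} \<longrightarrow> \<beta> i = 0"
      and z: "\<forall>z::'a \<Rightarrow> complex. (\<Sum>\<beta>\<in>S. c \<beta> * (\<Prod>i\<in>{}. z i ^ \<beta> i)) = 0" and b: "\<beta> \<in> S"
    have "S \<subseteq> {\<lambda>_. 0}" using S by auto
    then have "S = {\<lambda>_. 0}" using b by auto
    then show "c \<beta> = 0" using z b by auto
  qed
next
  case (insert j I)
  show ?case
  proof (intro allI impI ballI)
    fix S and c :: "('a \<Rightarrow> nat) \<Rightarrow> complex" and \<beta>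
    assume S: "finite S" "\<forall>\<beta>\<in>S. \<forall>i. i \<notin> insert j I \<longrightarrow> \<beta> i = 0"
      and z: "\<forall>z::'a \<Rightarrow> complex. (\<Sum>\<beta>\<in>S. c \<beta> * (\<Prod>i\<in>insert j I. z i ^ \<beta> i)) = 0" and b: "\<beta> \<in> S"
    define N where "N = (\<lambda>\<beta>. \<beta> j) ` S"
    have finN: "finite N" using S by (simp add: N_def)
    define Sn where "Sn n = {\<beta>\<in>S. \<beta> j = n}" for n
    have inner0: "(\<Sum>\<beta>\<in>Sn n. c \<beta> * (\<Prod>i\<in>I. z i ^ \<beta> i)) = 0" if n: "n \<in> N" for n z
    proof -
      define A where "A n = (\<Sum>\<beta>\<in>Sn n. c \<beta> * (\<Prod>i\<in>I. z i ^ \<beta> i))" for n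
      have "(\<Sum>n\<in>N. A n * w ^ n) = 0" for w
      proof -
        have "(\<Sum>n\<in>N. A n * w ^ n) = (\<Sum>n\<in>N. \<Sum>\<beta>\<in>Sn n. c \<beta> * (\<Prod>i\<in>insert j I. (z(j := w)) i ^ \<beta> i))"
        proof (rule sum.cong[OF refl])
          fix n assume "n \<in> N"
          have "A n * w ^ n = (\<Sum>\<beta>\<in>Sn n. c \<beta> * (\<Prod>i\<in>I. z i ^ \<beta> i) * w ^ n)"
            by (simp add: A_def sum_distrib_right)
          also have "\<dots> = (\<Sum>\<beta>\<in>Sn n. c \<beta> * (\<Prod>i\<in>insert j I. (z(j := w)) i ^ \<beta> i))"
          proof (rule sum.cong[OF refl])
            fix \<beta> assume "\<beta> \<in> Sn n"
            then have bj: "\<beta> j = n" by (simp add: Sn_def)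
            have "(\<Prod>i\<in>I. (z(j := w)) i ^ \<beta> i) = (\<Prod>i\<in>I. z i ^ \<beta> i)"
              by (rule prod.cong) (use insert.hyps in auto)
            then show "c \<beta> * (\<Prod>i\<in>I. z i ^ \<beta> i) * w ^ n = c \<beta> * (\<Prod>i\<in>insert j I. (z(j := w)) i ^ \<beta> i)"
              using insert.hyps bj by (simp add: mult_ac)
          qed
          finally show "A n * w ^ n = (\<Sum>\<beta>\<in>Sn n. c \<beta> * (\<Prod>i\<in>insert j I. (z(j := w)) i ^ \<beta> i))" .
        qed
        also have "\<dots> = (\<Sum>\<beta>\<in>S. c \<beta> * (\<Prod>i\<in>insert j I. (z(j := w)) i ^ \<beta> i))"
          unfolding Sn_def by (rule sum.group) (use S in \<open>auto simp: N_def\<close>)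
        also have "\<dots> = 0" using z by blast
        finally show ?thesis .
      qed
      from univ_poly_zero[OF finN this n] show ?thesis by (simp add: A_def)
    qed
    define n where "n = \<beta> j"
    have nN: "n \<in> N" using b by (simp add: N_def n_def)
    define S' where "S' = (\<lambda>\<gamma>. \<gamma>(j := 0)) ` Sn n"
    have inj: "inj_on (\<lambda>\<gamma>. \<gamma>(j := 0)) (Sn n)"
    proof
      fix \<gamma> \<gamma>' assume g: "\<gamma> \<in> Sn n" "\<gamma>' \<in> Sn n" "\<gamma>(j := 0) = \<gamma>'(j := 0)"
      show "\<gamma> = \<gamma>'"
      proof
        fix i show "\<gamma> i = \<gamma>' i"
          using g fun_upd_apply[of \<gamma> j 0 i] fun_upd_apply[of \<gamma>' j 0 i] by (cases "i = j") (auto simp: Sn_def)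
      qed
    qed
    define c' where "c' \<gamma> = c (\<gamma>(j := n))" for \<gamma>
    have h1: "finite S'" using S by (simp add: S'_def Sn_def)
    have h2: "\<forall>\<gamma>\<in>S'. \<forall>i. i \<notin> I \<longrightarrow> \<gamma> i = 0" using S by (auto simp: S'_def Sn_def)
    have h3: "\<forall>z::'a \<Rightarrow> complex. (\<Sum>\<gamma>\<in>S'. c' \<gamma> * (\<Prod>i\<in>I. z i ^ \<gamma> i)) = 0"
    proof
      fix z :: "'a \<Rightarrow> complex"
      have "(\<Sum>\<gamma>\<in>S'. c' \<gamma> * (\<Prod>i\<in>I. z i ^ \<gamma> i)) = (\<Sum>\<gamma>\<in>Sn n. c' (\<gamma>(j := 0)) * (\<Prod>i\<in>I. z i ^ (\<gamma>(j := 0)) i))"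
        unfolding S'_def by (rule sum.reindex[OF inj, unfolded comp_def])
      also have "\<dots> = (\<Sum>\<gamma>\<in>Sn n. c \<gamma> * (\<Prod>i\<in>I. z i ^ \<gamma> i))"
      proof (rule sum.cong[OF refl])
        fix \<gamma> assume g: "\<gamma> \<in> Sn n"
        have "\<gamma>(j := 0, j := n) = \<gamma>" using g by (auto simp: Sn_def)
        moreover have "(\<Prod>i\<in>I. z i ^ (\<gamma>(j := 0)) i) = (\<Prod>i\<in>I. z i ^ \<gamma> i)"
          by (rule prod.cong) (use insert.hyps in auto)
        ultimately show "c' (\<gamma>(j := 0)) * (\<Prod>i\<in>I. z i ^ (\<gamma>(j := 0)) i) = c \<gamma> * (\<Prod>i\<in>I. z i ^ \<gamma> i)"
          by (simp add: c'_def)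
      qed
      also have "\<dots> = 0" by (rule inner0[OF nN])
      finally show "(\<Sum>\<gamma>\<in>S'. c' \<gamma> * (\<Prod>i\<in>I. z i ^ \<gamma> i)) = 0" .
    qed
    have "\<forall>\<gamma>\<in>S'. c' \<gamma> = 0" using insert.IH h1 h2 h3 by blast
    moreover have "\<beta>(j := 0) \<in> S'" using b by (auto simp: S'_def Sn_def n_def)
    moreover have "\<beta>(j := 0, j := n) = \<beta>" by (simp add: n_def)
    ultimately show "c \<beta> = 0" by (metis c'_def)
  qed
qed

lemma multi_poly_zero:
  fixes c :: "('a::finite \<Rightarrow> nat) \<Rightarrow> complex"
  assumes "finite S" "\<And>z. (\<Sum>\<beta>\<in>S. c \<beta> * monom \<beta> z) = 0" "\<beta> \<in> S"
  shows "c \<beta> = 0"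
proof -
  have "\<forall>z::'a \<Rightarrow> complex. (\<Sum>\<beta>\<in>S. c \<beta> * (\<Prod>i\<in>UNIV. z i ^ \<beta> i)) = 0"
  proof
    fix z :: "'a \<Rightarrow> complex"
    show "(\<Sum>\<beta>\<in>S. c \<beta> * (\<Prod>i\<in>UNIV. z i ^ \<beta> i)) = 0"
      using assms(2)[of "\<chi> i. z i"] by (simp add: monom_def)
  qed
  then show ?thesis using multi_poly_zero_aux[of "UNIV::'a set"] assms by auto
qed

lemma monom_tendsto: "(f \<longlongrightarrow> v) F \<Longrightarrow> ((\<lambda>t. monom \<beta> (f t)) \<longlongrightarrow> monom \<beta> v) F"
  unfolding monom_def by (intro tendsto_prod tendsto_power tendsto_vec_nth)

lemma vec_scaleR_complex: "(t *\<^sub>R v) $ i = complex_of_real t * (v :: complex^'n) $ i"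
  by (subst vector_scaleR_component) (rule scaleR_conv_of_real)

lemma monom_scale: "monom \<beta> (t *\<^sub>R v) = complex_of_real t ^ sum \<beta> UNIV * monom \<beta> v"
proof -
  have "monom \<beta> (t *\<^sub>R v) = (\<Prod>i\<in>UNIV. (complex_of_real t * v $ i) ^ \<beta> i)"
  proof -
    have c: "(t *\<^sub>R v) $ i = complex_of_real t * v $ i" for i
      by (subst vector_scaleR_component) (rule scaleR_conv_of_real)
    show ?thesis unfolding monom_def c ..
  qed
  also have "\<dots> = complex_of_real t ^ sum \<beta> UNIV * monom \<beta> v"
    by (simp add: monom_def power_mult_distrib prod.distrib power_sum)
  finally show ?thesis .
qed

lemma poly_vanish:
  fixes Y :: "real^'p::finite \<Rightarrow> complex^'a::finite" and c :: "('a\<Rightarrow>nat) \<Rightarrow> complex"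
  assumes linL: "linear L"
    and d0: "0 < \<delta>" and YL: "\<forall>y. norm y \<le> \<delta> \<longrightarrow> norm (Y y - L y) \<le> KY * norm y ^ 2"
    and span: "\<forall>w. \<exists>x y. w = L x + \<i> *s L y"
    and big: "\<forall>\<^sub>F x in nhds 0. norm (\<Sum>\<beta>\<in>{\<beta>. sum \<beta> UNIV < k}. c \<beta> * monom \<beta> (Y x)) \<le> C * norm x ^ k"
  shows "\<forall>\<beta>. sum \<beta> UNIV < k \<longrightarrow> c \<beta> = 0"
proof -
  have main: "m < k \<Longrightarrow> \<forall>\<beta>. sum \<beta> UNIV = m \<longrightarrow> c \<beta> = 0" for m
  proof (induction m rule: less_induct)
    case (less m)
    have lo: "c \<beta> = 0" if "sum \<beta> UNIV < m" for \<beta> using less.IH[of "sum \<beta> UNIV"] less.prems that by auto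
    define Sm where "Sm = {\<beta>::'a\<Rightarrow>nat. sum \<beta> UNIV = m}"
    define Pm where "Pm z = (\<Sum>\<beta>\<in>Sm. c \<beta> * monom \<beta> z)" for z
    define Tset where "Tset = {\<beta>::'a\<Rightarrow>nat. m \<le> sum \<beta> UNIV \<and> sum \<beta> UNIV < k}"
    have finT: "finite Tset" by (rule finite_subset[OF _ finite_mi_less[of k]]) (auto simp: Tset_def)
    have SmT: "Sm \<subseteq> Tset" using less.prems by (auto simp: Sm_def Tset_def)
    have A: "Pm (L x) = 0" for x
    proof -
      define q where "q t = inverse t *\<^sub>R Y (t *\<^sub>R x)" for t :: real
      have "((\<lambda>t. q t - L x) \<longlongrightarrow> 0) (at_right 0)"
      proof (rule Lim_null_comparison)
        show "\<forall>\<^sub>F t in at_right 0. norm (q t - L x) \<le> \<bar>KY\<bar> * norm x ^ 2 * t"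
          unfolding eventually_at_right_field
        proof (intro exI[of _ "\<delta> / (norm x + 1)"] conjI allI impI)
          show "0 < \<delta> / (norm x + 1)" using d0 by (simp add: add_nonneg_pos)
          fix t :: real assume t: "0 < t" "t < \<delta> / (norm x + 1)"
          have "t * norm x \<le> t * (norm x + 1)" using t by simp
          also have "\<dots> \<le> \<delta>"
          proof -
            have "0 < norm x + 1" by (simp add: add_nonneg_pos)
            then show ?thesis using t by (simp add: less_divide_eq less_imp_le)
          qed
          finally have tx: "norm (t *\<^sub>R x) \<le> \<delta>" using t by simp
          have "q t - L x = inverse t *\<^sub>R (Y (t *\<^sub>R x) - L (t *\<^sub>R x))"
            using t linL by (simp add: q_def linear_cmul scaleR_diff_right)
          then have "norm (q t - L x) = inverse t * norm (Y (t *\<^sub>R x) - L (t *\<^sub>R x))"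
            using t by (simp only: norm_scaleR) simp
          also have "\<dots> = norm (Y (t *\<^sub>R x) - L (t *\<^sub>R x)) / t" by (simp add: divide_inverse mult.commute)
          finally have "norm (q t - L x) = norm (Y (t *\<^sub>R x) - L (t *\<^sub>R x)) / t" .
          also have "\<dots> \<le> KY * norm (t *\<^sub>R x) ^ 2 / t" using YL[rule_format, OF tx] t by (intro divide_right_mono) auto
          also have "\<dots> = KY * norm x ^ 2 * t" using t by (simp add: power2_eq_square field_simps)
          also have "\<dots> \<le> \<bar>KY\<bar> * norm x ^ 2 * t" using t by (intro mult_right_mono) auto
          finally show "norm (q t - L x) \<le> \<bar>KY\<bar> * norm x ^ 2 * t" .
        qed
        show "((\<lambda>t. \<bar>KY\<bar> * norm x ^ 2 * t) \<longlongrightarrow> 0) (at_right 0)"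
          by (intro tendsto_mult_right_zero tendsto_ident_at)
      qed
      then have qlim: "(q \<longlongrightarrow> L x) (at_right 0)" by (rule LIM_zero_cancel)
      define E where "E t = (\<Sum>\<beta>\<in>Tset. c \<beta> * complex_of_real t ^ (sum \<beta> UNIV - m) * monom \<beta> (q t))" for t
      have "(E \<longlongrightarrow> (\<Sum>\<beta>\<in>Tset. c \<beta> * complex_of_real 0 ^ (sum \<beta> UNIV - m) * monom \<beta> (L x))) (at_right 0)"
        unfolding E_def by (intro tendsto_sum tendsto_mult tendsto_const tendsto_power tendsto_of_real
            tendsto_ident_at monom_tendsto qlim)
      moreover have "(\<Sum>\<beta>\<in>Tset. c \<beta> * complex_of_real 0 ^ (sum \<beta> UNIV - m) * monom \<beta> (L x)) = Pm (L x)"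
      proof -
        have "(\<Sum>\<beta>\<in>Tset. c \<beta> * complex_of_real 0 ^ (sum \<beta> UNIV - m) * monom \<beta> (L x))
            = (\<Sum>\<beta>\<in>Tset. if \<beta> \<in> Sm then c \<beta> * monom \<beta> (L x) else 0)"
          by (rule sum.cong) (auto simp: Sm_def Tset_def)
        also have "\<dots> = (\<Sum>\<beta>\<in>Sm. c \<beta> * monom \<beta> (L x))"
          using finT SmT by (simp add: sum.If_cases Int_absorb1)
        finally show ?thesis by (simp add: Pm_def)
      qed
      ultimately have E1: "(E \<longlongrightarrow> Pm (L x)) (at_right 0)" by simp
      have E2: "(E \<longlongrightarrow> 0) (at_right 0)"
      proof (rule Lim_null_comparison)
        have "filterlim (\<lambda>t. t *\<^sub>R x) (nhds 0) (at_right (0::real))"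
        proof -
          have "((\<lambda>t. t *\<^sub>R x) \<longlongrightarrow> 0 *\<^sub>R x) (at_right (0::real))"
            by (intro tendsto_scaleR tendsto_ident_at tendsto_const)
          then show ?thesis by simp
        qed
        from eventually_compose_filterlim[OF big this]
        have ev: "\<forall>\<^sub>F t in at_right 0. norm (\<Sum>\<beta>\<in>{\<beta>. sum \<beta> UNIV < k}. c \<beta> * monom \<beta> (Y (t *\<^sub>R x))) \<le> C * norm (t *\<^sub>R x) ^ k" .
        show "\<forall>\<^sub>F t in at_right 0. norm (E t) \<le> C * norm x ^ k * t ^ (k - m)"
          using ev eventually_at_right_less[of "0::real"]
        proof eventually_elim
          case (elim t)
          then have t: "t > 0" by simp
          have Yq: "Y (t *\<^sub>R x) = t *\<^sub>R q t" using t by (simp add: q_def)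
          have "(\<Sum>\<beta>\<in>{\<beta>. sum \<beta> UNIV < k}. c \<beta> * monom \<beta> (Y (t *\<^sub>R x)))
              = (\<Sum>\<beta>\<in>Tset. c \<beta> * monom \<beta> (Y (t *\<^sub>R x)))"
            by (rule sum.mono_neutral_right[OF finite_mi_less]) (auto simp: Tset_def intro: lo leI)
          also have "\<dots> = (\<Sum>\<beta>\<in>Tset. complex_of_real t ^ m * (c \<beta> * complex_of_real t ^ (sum \<beta> UNIV - m) * monom \<beta> (q t)))"
          proof (rule sum.cong[OF refl])
            fix \<beta> assume "\<beta> \<in> Tset"
            then have "sum \<beta> UNIV = m + (sum \<beta> UNIV - m)" by (auto simp: Tset_def)
            then have "complex_of_real t ^ sum \<beta> UNIV = complex_of_real t ^ m * complex_of_real t ^ (sum \<beta> UNIV - m)"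
              by (metis power_add)
            then show "c \<beta> * monom \<beta> (Y (t *\<^sub>R x)) = complex_of_real t ^ m * (c \<beta> * complex_of_real t ^ (sum \<beta> UNIV - m) * monom \<beta> (q t))"
              by (simp add: Yq monom_scale mult_ac)
          qed
          also have "\<dots> = complex_of_real t ^ m * E t" by (simp add: E_def sum_distrib_left)
          finally have "norm (E t) * t ^ m \<le> C * norm (t *\<^sub>R x) ^ k"
            using elim t by (simp add: norm_mult norm_power mult.commute)
          also have "\<dots> = C * norm x ^ k * t ^ (k - m) * t ^ m"
          proof -
            have "k = (k - m) + m" using less.prems by simp
            then have "t ^ k = t ^ (k - m) * t ^ m" by (metis power_add)
            then show ?thesis using t by (simp add: power_mult_distrib mult_ac)
          qed
          finally show ?case using t by simp
        qed
        have "((\<lambda>t::real. t ^ (k - m)) \<longlongrightarrow> 0 ^ (k - m)) (at_right 0)"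
          by (intro tendsto_power tendsto_ident_at)
        then have "((\<lambda>t::real. t ^ (k - m)) \<longlongrightarrow> 0) (at_right 0)" using less.prems by simp
        then show "((\<lambda>t. C * norm x ^ k * t ^ (k - m)) \<longlongrightarrow> 0) (at_right 0)"
          by (rule tendsto_mult_right_zero)
      qed
      show "Pm (L x) = 0" using tendsto_unique[OF _ E1 E2] by simp
    qed
    have B: "Pm w = 0" for w
    proof -
      obtain x y where w: "w = L x + \<i> *s L y" using span by blast
      define g where "g s = (\<Sum>\<beta>\<in>Sm. c \<beta> * (\<Prod>i\<in>UNIV. (L x $ i + s * L y $ i) ^ \<beta> i))" for s
      have gP: "g s = Pm (L x + s *s L y)" for s by (simp add: g_def Pm_def monom_def)
      have "g \<i> = 0"
      proof (rule analytic_continuation[of g UNIV "range complex_of_real" 0])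
        show "g holomorphic_on UNIV" unfolding g_def by (intro holomorphic_intros)
        show "0 islimpt range complex_of_real"
          unfolding islimpt_approachable
        proof (intro allI impI)
          fix e :: real assume "e > 0"
          then show "\<exists>x'\<in>range complex_of_real. x' \<noteq> 0 \<and> dist x' 0 < e"
          proof (intro bexI[of _ "complex_of_real (e/2)"])
            show "complex_of_real (e/2) \<in> range complex_of_real" by (rule rangeI)
          qed (use \<open>e > 0\<close> in auto)
        qed
        fix z assume "z \<in> range complex_of_real"
        then obtain r where z: "z = complex_of_real r" by blast
        have eq: "L (x + r *\<^sub>R y) = L x + r *\<^sub>R L y" using linL by (simp add: linear_add linear_cmul)
        have "L x + z *s L y = L (x + r *\<^sub>R y)"
        proof (subst vec_eq_iff, intro allI)
          fix i
          have "L (x + r *\<^sub>R y) $ i = (L x + r *\<^sub>R L y) $ i" by (simp only: eq)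
          also have "\<dots> = L x $ i + (r *\<^sub>R L y) $ i" by (rule vector_add_component)
          also have "\<dots> = L x $ i + complex_of_real r * L y $ i" by (simp only: vec_scaleR_complex)
          also have "\<dots> = (L x + z *s L y) $ i" by (simp only: vector_add_component vector_smult_component z)
          finally show "(L x + z *s L y) $ i = L (x + r *\<^sub>R y) $ i" by simp
        qed
        then show "g z = 0" using A gP by simp
      qed auto
      then show ?thesis using gP w by simp
    qed
    show ?case
    proof (intro allI impI)
      fix \<beta> :: "'a \<Rightarrow> nat" assume "sum \<beta> UNIV = m"
      then show "c \<beta> = 0"
        using multi_poly_zero[of Sm c \<beta>] B finite_mi_eq[of m] by (simp add: Pm_def Sm_def)
    qed
  qed
  show ?thesis using main by blast
qed

lemma surj_from_orth:
  fixes f :: "'a::euclidean_space \<Rightarrow> 'b::euclidean_space"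
  assumes linf: "linear f" and orth: "\<And>c. (\<forall>v. c \<bullet> f v = 0) \<Longrightarrow> c = 0"
  shows "surj f"
proof (rule ccontr)
  assume ns: "\<not> surj f"
  have sub: "subspace (range f)" by (rule linear_subspace_image[OF linf subspace_UNIV])
  have "dim (range f) \<noteq> DIM('b)"
  proof
    assume "dim (range f) = DIM('b)"
    then have "span (range f) = UNIV" by (simp add: dim_eq_full)
    then have "range f = UNIV" using sub by (metis span_eq_iff)
    then show False using ns by simp
  qed
  moreover have "dim (range f) \<le> DIM('b)" by (rule dim_subset_UNIV)
  ultimately have "dim (range f) < DIM('b)" by simp
  then obtain x where x: "x \<noteq> 0" "\<And>y. y \<in> span (range f) \<Longrightarrow> orthogonal x y"
    using orthogonal_to_subspace_exists by blast
  have "\<forall>v. x \<bullet> f v = 0"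
  proof
    fix v have "f v \<in> span (range f)" by (rule span_base) simp
    then show "x \<bullet> f v = 0" using x(2) by (simp add: orthogonal_def)
  qed
  then show False using orth x(1) by blast
qed

definition lam :: "complex^'a \<Rightarrow> complex^'a \<Rightarrow> complex" where
  "lam g v = (\<Sum>l\<in>UNIV. g $ l * v $ l)"

lemma lam_add: "lam g (u + v) = lam g u + lam g v"
  by (simp add: lam_def sum.distrib algebra_simps)
lemma lam_diff: "lam g (u - v) = lam g u - lam g v"
  by (simp add: lam_def sum_subtractf algebra_simps)
lemma lam_smult: "lam g (c *s v) = c * lam g v"
  by (simp add: lam_def sum_distrib_left mult_ac)
lemma lam_scaleR: "lam g (r *\<^sub>R v) = complex_of_real r * lam g v"
proof -
  have "lam g (r *\<^sub>R v) = (\<Sum>l\<in>UNIV. g $ l * (complex_of_real r * v $ l))"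
    unfolding lam_def by (intro sum.cong refl) (subst vector_scaleR_component, simp add: scaleR_conv_of_real)
  then show ?thesis by (simp add: lam_def sum_distrib_left mult_ac)
qed

lemma complex_decomp:
  fixes v :: "complex^'a::finite"
  shows "v = (\<Sum>l\<in>UNIV. Re (v $ l) *\<^sub>R axis l 1 + Im (v $ l) *\<^sub>R axis l \<i>)"
proof (subst vec_eq_iff, intro allI)
  fix i
  have "(\<Sum>l\<in>UNIV. Re (v $ l) *\<^sub>R axis l 1 + Im (v $ l) *\<^sub>R axis l \<i>) $ i
      = (\<Sum>x\<in>UNIV. Re (v $ x) *\<^sub>R (if i = x then 1 else 0) + Im (v $ x) *\<^sub>R (if i = x then \<i> else 0))"
    by (simp add: sum_component axis_def)
  also have "\<dots> = (\<Sum>l\<in>UNIV. if l = i then Re (v $ l) *\<^sub>R 1 + Im (v $ l) *\<^sub>R \<i> else 0)"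
    by (rule sum.cong) auto
  also have "\<dots> = Re (v $ i) *\<^sub>R 1 + Im (v $ i) *\<^sub>R \<i>" by simp
  also have "\<dots> = v $ i" by (simp add: complex_eq_iff)
  finally show "v $ i = (\<Sum>l\<in>UNIV. Re (v $ l) *\<^sub>R axis l 1 + Im (v $ l) *\<^sub>R axis l \<i>) $ i" by simp
qed

lemma phi_lam:
  fixes \<phi> :: "complex^'a::finite \<Rightarrow> real"
  assumes lin: "linear \<phi>"
  shows "\<phi> v = 2 * Re (lam (\<chi> l. (complex_of_real (\<phi> (axis l 1)) - \<i> * complex_of_real (\<phi> (axis l \<i>))) / 2) v)"
proof -
  have "\<phi> v = \<phi> (\<Sum>l\<in>UNIV. Re (v $ l) *\<^sub>R axis l 1 + Im (v $ l) *\<^sub>R axis l \<i>)"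
    by (subst complex_decomp) (rule refl)
  also have "\<dots> = (\<Sum>l\<in>UNIV. Re (v $ l) * \<phi> (axis l 1) + Im (v $ l) * \<phi> (axis l \<i>))"
    using lin by (simp add: linear_sum linear_add linear_cmul)
  also have "\<dots> = 2 * Re (lam (\<chi> l. (complex_of_real (\<phi> (axis l 1)) - \<i> * complex_of_real (\<phi> (axis l \<i>))) / 2) v)"
  proof -
    have re: "Re ((complex_of_real a - \<i> * complex_of_real b) / 2 * z) = (a * Re z + b * Im z) / 2" for a b z
      by (simp add: algebra_simps)
    show ?thesis unfolding lam_def Re_sum by (simp add: re sum_divide_distrib[symmetric] algebra_simps)
  qed
  finally show ?thesis .
qed

lemma span_lemma:
  fixes L :: "real^'p::finite \<Rightarrow> complex^'a::finite" and \<phi> :: "'d::finite \<Rightarrow> complex^'a \<Rightarrow> real"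
  assumes linL: "linear L" and injL: "inj L"
    and card: "CARD('p) + CARD('d) = 2 * CARD('a)"
    and lin\<phi>: "\<And>j. linear (\<phi> j)"
    and ind: "\<And>c::'d\<Rightarrow>real. (\<forall>v. (\<Sum>j\<in>UNIV. c j * \<phi> j v) = 0) \<Longrightarrow> \<forall>j. c j = 0"
    and gen: "\<And>c::'d\<Rightarrow>complex. (\<Sum>j\<in>UNIV. c j *s G j) = 0 \<Longrightarrow> \<forall>j. c j = 0"
    and Gdef: "\<And>j. G j = (\<chi> l. (complex_of_real (\<phi> j (axis l 1)) - \<i> * complex_of_real (\<phi> j (axis l \<i>))) / 2)"
    and tang: "\<And>x j. \<phi> j (L x) = 0"
  shows "\<forall>w. \<exists>x y. w = L x + \<i> *s L y"
proof -
  define \<Phi> where "\<Phi> v = (\<chi> j. \<phi> j v)" for v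
  have lin\<Phi>: "linear \<Phi>"
    by (rule linearI) (simp_all add: \<Phi>_def vec_eq_iff linear_add[OF lin\<phi>] linear_cmul[OF lin\<phi>])
  have surj\<Phi>: "surj \<Phi>"
  proof (rule surj_from_orth[OF lin\<Phi>])
    fix c :: "real^'d" assume "\<forall>v. c \<bullet> \<Phi> v = 0"
    then have "\<forall>v. (\<Sum>j\<in>UNIV. c $ j * \<phi> j v) = 0" by (simp add: \<Phi>_def inner_vec_def)
    then have "\<forall>j. c $ j = 0" by (rule ind)
    then show "c = 0" by (simp add: vec_eq_iff)
  qed
  obtain R where linR: "linear R" and \<Phi>R: "\<Phi> \<circ> R = id"
    using real_vector.linear_surjective_right_inverse[OF lin\<Phi> surj\<Phi>] by blast
  have \<Phi>Ry: "\<Phi> (R y) = y" for y using \<Phi>R by (metis comp_apply id_apply)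
  have injR: "inj R" by (metis \<Phi>Ry injI)
  have \<Phi>L: "\<Phi> (L x) = 0" for x by (simp add: \<Phi>_def tang vec_eq_iff)
  define T where "T = range L"
  define RR where "RR = range R"
  have subT: "subspace T" unfolding T_def by (rule linear_subspace_image[OF linL subspace_UNIV])
  have subR: "subspace RR" unfolding RR_def by (rule linear_subspace_image[OF linR subspace_UNIV])
  have dT: "dim T = CARD('p)"
    unfolding T_def using dim_image_eq[OF linL, of UNIV] injL by (simp add: inj_on_def DIM_cart)
  have dR: "dim RR = CARD('d)"
    unfolding RR_def using dim_image_eq[OF linR, of UNIV] injR by (simp add: inj_on_def DIM_cart)
  have TR0: "T \<inter> RR \<subseteq> {0}"
  proof
    fix v assume "v \<in> T \<inter> RR"
    then obtain x y where v: "v = L x" "v = R y" unfolding T_def RR_def by blast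
    then have "y = 0" using \<Phi>L \<Phi>Ry by metis
    then show "v \<in> {0}" using v linR by (simp add: linear_0)
  qed
  define SS where "SS = {x + y |x y. x \<in> T \<and> y \<in> RR}"
  have "dim SS + dim (T \<inter> RR) = dim T + dim RR" unfolding SS_def by (rule dim_sums_Int[OF subT subR])
  moreover have "dim (T \<inter> RR) = 0" using TR0 by (simp add: dim_eq_0)
  ultimately have "dim SS = DIM(complex^'a)" using dT dR card by (simp add: DIM_cart)
  then have "span SS = UNIV" by (rule dim_eq_full[THEN iffD1])
  moreover have "subspace SS" unfolding SS_def by (rule subspace_sums[OF subT subR])
  ultimately have SSU: "SS = UNIV" by (metis span_eq_iff)
  have Kc: "\<exists>x. v = L x" if v: "\<Phi> v = 0" for v
  proof -
    have "v \<in> SS" using SSU by simp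
    then obtain x y where xy: "v = L x + R y" by (auto simp: SS_def T_def RR_def)
    then have "\<Phi> v = \<Phi> (L x) + \<Phi> (R y)" using lin\<Phi> by (simp add: linear_add)
    then have "y = 0" using v \<Phi>L \<Phi>Ry by simp
    then have "v = L x" using xy linR by (simp add: linear_0)
    then show ?thesis by blast
  qed
  define lm where "lm j v = lam (G j) v" for j v
  have phlm: "\<phi> j v = 2 * Re (lm j v)" for j v
    unfolding lm_def Gdef by (rule phi_lam[OF lin\<phi>])
  define \<Psi> where "\<Psi> v = ((\<chi> j. Re (lm j v)), (\<chi> j. Im (lm j v)))" for v
  have lin\<Psi>: "linear \<Psi>"
    by (rule linearI) (simp_all add: \<Psi>_def lm_def vec_eq_iff lam_add lam_scaleR)
  have surj\<Psi>: "surj \<Psi>"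
  proof (rule surj_from_orth[OF lin\<Psi>])
    fix c :: "(real^'d) \<times> (real^'d)" assume c: "\<forall>v. c \<bullet> \<Psi> v = 0"
    obtain c1 c2 where c12: "c = (c1, c2)" by (cases c)
    define \<gamma> where "\<gamma> j = complex_of_real (c1 $ j) - \<i> * complex_of_real (c2 $ j)" for j
    define \<mu> where "\<mu> v = (\<Sum>j\<in>UNIV. \<gamma> j * lm j v)" for v
    have re\<mu>: "Re (\<mu> v) = 0" for v
    proof -
      have "Re (\<mu> v) = (\<Sum>j\<in>UNIV. c1 $ j * Re (lm j v) + c2 $ j * Im (lm j v))"
        by (simp add: \<mu>_def \<gamma>_def Re_sum algebra_simps)
      also have "\<dots> = c \<bullet> \<Psi> v" by (simp add: c12 \<Psi>_def inner_vec_def sum.distrib)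
      finally show ?thesis using c by simp
    qed
    have \<mu>0: "\<mu> v = 0" for v
    proof -
      have "\<mu> (\<i> *s v) = \<i> * \<mu> v" by (simp add: \<mu>_def lm_def lam_smult sum_distrib_left mult_ac)
      then have "Im (\<mu> v) = 0" using re\<mu>[of "\<i> *s v"] by simp
      then show ?thesis using re\<mu>[of v] by (simp add: complex_eq_iff)
    qed
    have "(\<Sum>j\<in>UNIV. \<gamma> j *s G j) = 0"
    proof (subst vec_eq_iff, intro allI)
      fix l
      have "\<mu> (axis l 1) = (\<Sum>j\<in>UNIV. \<gamma> j * G j $ l)"
        by (simp add: \<mu>_def lm_def lam_def axis_def if_distrib[of "\<lambda>z. _ * z"] sum.delta cong: if_cong)
      then show "(\<Sum>j\<in>UNIV. \<gamma> j *s G j) $ l = 0 $ l" using \<mu>0 by (simp add: sum_component)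
    qed
    then have "\<forall>j. \<gamma> j = 0" by (rule gen)
    then have "\<forall>j. c1 $ j = 0 \<and> c2 $ j = 0" by (simp add: \<gamma>_def complex_eq_iff)
    then show "c = 0" by (simp add: c12 vec_eq_iff zero_prod_def)
  qed
  show ?thesis
  proof
    fix w
    obtain v where v: "\<Psi> v = (0, \<chi> j. - Re (lm j w))" using surj\<Psi> by (metis surjD)
    then have vre: "Re (lm j v) = 0" "Im (lm j v) = - Re (lm j w)" for j
      by (auto simp: \<Psi>_def vec_eq_iff)
    define u where "u = w - \<i> *s v"
    have "\<Phi> v = 0" by (simp add: \<Phi>_def vec_eq_iff phlm vre)
    then obtain y where y: "v = L y" using Kc by blast
    have "Re (lm j u) = 0" for j
      by (simp add: u_def lm_def lam_diff lam_smult vre[unfolded lm_def])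
    then have "\<Phi> u = 0" by (simp add: \<Phi>_def vec_eq_iff phlm)
    then obtain x where x: "u = L x" using Kc by blast
    have "w = u + \<i> *s v" by (simp add: u_def)
    then show "\<exists>x y. w = L x + \<i> *s L y" using x y by blast
  qed
qed

definition proj1 :: "complex^('a::finite + 'b::finite) \<Rightarrow> complex^'a" where
  "proj1 w = (\<chi> i. w $ Inl i)"

lemma proj1_emb [simp]: "proj1 (emb z :: complex^('a::finite + 'b::finite)) = z"
  by (simp add: proj1_def emb_def vec_eq_iff)

lemma emb_Inl [simp]: "(emb z :: complex^('a::finite + 'b::finite)) $ Inl i = z $ i"
  by (simp add: emb_def)

lemma emb_Inr [simp]: "(emb z :: complex^('a::finite + 'b::finite)) $ Inr j = 0"
  by (simp add: emb_def)

lemma emb_0 [simp]: "emb 0 = 0"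
  by (simp add: emb_def vec_eq_iff split: sum.splits)

lemma linear_proj1: "linear proj1"
  by (rule linearI) (simp_all add: proj1_def vec_eq_iff)

lemma linear_emb: "linear emb"
  by (rule linearI) (simp_all add: emb_def vec_eq_iff split: sum.splits)

lemma proj1_diff: "proj1 (u - v) = proj1 u - proj1 v"
  by (simp add: proj1_def vec_eq_iff)

lemma norm_proj1: "norm (proj1 w) \<le> norm w"
proof -
  have "norm (proj1 w) ^ 2 = (\<Sum>i\<in>UNIV. norm (w $ Inl i) ^ 2)"
    by (simp add: proj1_def norm_vec_def L2_set_def sum_nonneg)
  also have "\<dots> = (\<Sum>s\<in>range Inl. norm (w $ s) ^ 2)"
    by (simp add: sum.reindex)
  also have "\<dots> \<le> (\<Sum>s\<in>UNIV. norm (w $ s) ^ 2)"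
    by (rule sum_mono2) auto
  also have "\<dots> = norm w ^ 2" by (simp add: norm_vec_def L2_set_def sum_nonneg)
  finally show ?thesis by (rule power2_le_imp_le) simp
qed

lemma emb_proj1: "(\<forall>j. w $ Inr j = 0) \<Longrightarrow> emb (proj1 w) = w"
  by (auto simp: emb_def proj1_def vec_eq_iff split: sum.splits)

lemma sum_UNIV_Plus: "(\<Sum>s\<in>(UNIV::('a::finite + 'b::finite) set). f s) = (\<Sum>i\<in>UNIV. f (Inl i)) + (\<Sum>j\<in>UNIV. f (Inr j))"
  using sum.Plus[of "UNIV::'a set" "UNIV::'b set" f] by (simp add: UNIV_Plus_UNIV[symmetric] comp_def del: UNIV_Plus_UNIV)

lemma prod_UNIV_Plus: "(\<Prod>s\<in>(UNIV::('a::finite + 'b::finite) set). f s) = (\<Prod>i\<in>UNIV. f (Inl i)) * (\<Prod>j\<in>UNIV. f (Inr j))"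
  using prod.Plus[of "UNIV::'a set" "UNIV::'b set" f] by (simp add: UNIV_Plus_UNIV[symmetric] comp_def del: UNIV_Plus_UNIV)

lemma sum_ext_mi [simp]: "sum (ext_mi \<beta> :: 'a::finite + 'b::finite \<Rightarrow> nat) UNIV = sum \<beta> UNIV"
  by (simp add: sum_UNIV_Plus ext_mi_def)

lemma monom_emb_ext: "monom (ext_mi \<beta> :: 'a::finite + 'b::finite \<Rightarrow> nat) (emb z) = monom \<beta> z"
  by (simp add: monom_def prod_UNIV_Plus ext_mi_def)

lemma monom_emb_zero: "\<alpha> (Inr j) > 0 \<Longrightarrow> monom (\<alpha> :: 'a::finite + 'b::finite \<Rightarrow> nat) (emb z) = 0"
  unfolding monom_def
proof (rule prod_zero)
  assume "\<alpha> (Inr j) > 0"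
  then show "\<exists>s\<in>UNIV. (emb z $ s) ^ \<alpha> s = 0" by (intro bexI[of _ "Inr j"]) auto
qed simp

lemma inj_ext_mi: "inj (ext_mi :: ('a \<Rightarrow> nat) \<Rightarrow> ('a + 'b \<Rightarrow> nat))"
  unfolding inj_def ext_mi_def fun_eq_iff by (metis sum.case(1))

lemma trunc_emb:
  fixes a :: "(('a::finite + 'b::finite) \<Rightarrow> nat) \<Rightarrow> complex^('a + 'b)"
  shows "trunc_map a k (emb z) $ s = (\<Sum>\<beta>\<in>{\<beta>. sum \<beta> UNIV < k}. a (ext_mi \<beta>) $ s * monom \<beta> z)"
proof -
  define A where "A = {\<alpha>::'a + 'b \<Rightarrow> nat. sum \<alpha> UNIV < k}"
  define B where "B = {\<beta>::'a \<Rightarrow> nat. sum \<beta> UNIV < k}"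
  have finA: "finite A" unfolding A_def by (rule finite_mi_less)
  have sub: "ext_mi ` B \<subseteq> A" by (auto simp: A_def B_def)
  have "trunc_map a k (emb z) $ s = (\<Sum>\<alpha>\<in>A. monom \<alpha> (emb z) * a \<alpha> $ s)"
    by (simp add: trunc_map_def A_def sum_component)
  also have "\<dots> = (\<Sum>\<alpha>\<in>ext_mi ` B. monom \<alpha> (emb z) * a \<alpha> $ s)"
  proof (rule sum.mono_neutral_right[OF finA sub])
    show "\<forall>\<alpha>\<in>A - ext_mi ` B. monom \<alpha> (emb z) * a \<alpha> $ s = 0"
    proof
      fix \<alpha> assume \<alpha>: "\<alpha> \<in> A - ext_mi ` B"
      show "monom \<alpha> (emb z) * a \<alpha> $ s = 0"
      proof (cases "\<exists>j. \<alpha> (Inr j) > 0")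
        case True
        then obtain j where "\<alpha> (Inr j) > 0" by blast
        then show ?thesis by (simp add: monom_emb_zero)
      next
        case False
        then have "\<alpha> = ext_mi (\<lambda>i. \<alpha> (Inl i))"
          by (auto simp: ext_mi_def fun_eq_iff split: sum.splits)
        moreover have "(\<lambda>i. \<alpha> (Inl i)) \<in> B"
        proof -
          have "sum \<alpha> UNIV < k" using \<alpha> by (simp add: A_def)
          then have "sum (ext_mi (\<lambda>i. \<alpha> (Inl i)) :: 'a + 'b \<Rightarrow> nat) UNIV < k"
            using \<open>\<alpha> = ext_mi (\<lambda>i. \<alpha> (Inl i))\<close> by simp
          then show ?thesis by (simp add: B_def)
        qed
        ultimately have False using \<alpha> by blast
        then show ?thesis ..
      qed
    qed
  qed
  also have "\<dots> = (\<Sum>\<beta>\<in>B. monom (ext_mi \<beta> :: 'a + 'b \<Rightarrow> nat) (emb z) * a (ext_mi \<beta>) $ s)"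
    by (rule sum.reindex[OF inj_on_subset[OF inj_ext_mi subset_UNIV], unfolded comp_def])
  also have "\<dots> = (\<Sum>\<beta>\<in>B. a (ext_mi \<beta>) $ s * monom \<beta> z)"
    by (simp add: monom_emb_ext mult.commute)
  finally show ?thesis by (simp add: B_def)
qed

lemma trunc_proj:
  fixes a :: "(('a::finite + 'b::finite) \<Rightarrow> nat) \<Rightarrow> complex^('a + 'b)"
  shows "trunc_map (\<lambda>\<beta>. \<chi> i. a (ext_mi \<beta>) $ Inl i) k z = proj1 (trunc_map a k (emb z))"
proof (subst vec_eq_iff, intro allI)
  fix i
  have "proj1 (trunc_map a k (emb z)) $ i = trunc_map a k (emb z) $ Inl i" by (simp add: proj1_def)
  also have "\<dots> = (\<Sum>\<beta>\<in>{\<beta>. sum \<beta> UNIV < k}. a (ext_mi \<beta>) $ Inl i * monom \<beta> z)" by (rule trunc_emb)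
  also have "\<dots> = trunc_map (\<lambda>\<beta>. \<chi> i. a (ext_mi \<beta>) $ Inl i) k z $ i"
    by (simp add: trunc_map_def sum_component mult.commute)
  finally show "trunc_map (\<lambda>\<beta>. \<chi> i. a (ext_mi \<beta>) $ Inl i) k z $ i = proj1 (trunc_map a k (emb z)) $ i" by simp
qed

lemma trunc_tendsto:
  fixes a :: "('m::finite \<Rightarrow> nat) \<Rightarrow> complex^'m"
  shows "(f \<longlongrightarrow> v) F \<Longrightarrow> ((\<lambda>x. trunc_map a k (f x)) \<longlongrightarrow> trunc_map a k v) F"
proof -
  assume f: "(f \<longlongrightarrow> v) F"
  have eq: "trunc_map a k z = (\<chi> s. \<Sum>\<alpha>\<in>{\<alpha>. sum \<alpha> UNIV < k}. monom \<alpha> z * a \<alpha> $ s)" for z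
    by (simp add: trunc_map_def vec_eq_iff sum_component)
  show ?thesis unfolding eq
    by (intro tendsto_vec_lambda tendsto_sum tendsto_mult tendsto_const monom_tendsto f)
qed

lemma trunc_0:
  fixes a :: "('m::finite \<Rightarrow> nat) \<Rightarrow> complex^'m"
  shows "invertible_formal_map a \<Longrightarrow> trunc_map a k 0 = 0"
proof -
  assume inv: "invertible_formal_map a"
  have "trunc_map a k 0 = (\<Sum>\<alpha>\<in>{\<alpha>. sum \<alpha> UNIV < k}. monom \<alpha> 0 *s a \<alpha>)" by (simp add: trunc_map_def)
  also have "\<dots> = 0"
  proof (rule sum.neutral, rule ballI)
    fix \<alpha> :: "'m \<Rightarrow> nat" assume "\<alpha> \<in> {\<alpha>. sum \<alpha> UNIV < k}"
    show "monom \<alpha> 0 *s a \<alpha> = 0"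
    proof (cases "\<alpha> = (\<lambda>_. 0)")
      case True then show ?thesis using inv by (simp add: invertible_formal_map_def vec_eq_iff)
    next
      case False
      then obtain i where "\<alpha> i > 0" by (auto simp: fun_eq_iff)
      then have "monom \<alpha> 0 = 0" unfolding monom_def by (intro prod_zero) (auto intro!: bexI[of _ i])
      then show ?thesis by (simp add: vec_eq_iff)
    qed
  qed
  finally show ?thesis .
qed

lemma coord_frechet:
  fixes F :: "'x::euclidean_space \<Rightarrow> real^'n::finite"
  assumes "(F has_derivative L) (at p)"
  shows "frechet_derivative (\<lambda>W. F W $ j) (at p) = (\<lambda>v. L v $ j)"
proof -
  have "((\<lambda>W. F W $ j) has_derivative (\<lambda>v. L v $ j)) (at p)"
    by (rule bounded_linear.has_derivative[OF bounded_linear_vec_nth assms])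
  then show ?thesis by (rule frechet_derivative_at[symmetric])
qed

lemma strict_deriv_ex:
  fixes F :: "'x::euclidean_space \<Rightarrow> 'y::euclidean_space"
  assumes "real_analytic_map_on F U" "p \<in> U"
  obtains D where "(F has_derivative D) (at p)" "linear D"
  using analytic_map_strict[OF assms] strict_imp_deriv by blast

lemma deriv_Inr_zero:
  fixes Z :: "real^'p::finite \<Rightarrow> complex^('a::finite + 'b::finite)"
  assumes D: "(Z has_derivative D) (at x)" and V: "open V" "x \<in> V" and ZV: "\<And>y. y \<in> V \<Longrightarrow> Z y $ Inr j = 0"
  shows "D v $ Inr j = 0"
proof -
  have d1: "((\<lambda>y. Z y $ Inr j) has_derivative (\<lambda>v. D v $ Inr j)) (at x)"
    by (rule bounded_linear.has_derivative[OF bounded_linear_vec_nth D])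
  have ev: "\<forall>\<^sub>F y in at x. 0 = Z y $ Inr j"
  proof -
    have "\<forall>\<^sub>F y in nhds x. y \<in> V" by (rule eventually_nhds_in_open[OF V])
    then have "\<forall>\<^sub>F y in at x. y \<in> V" by (simp add: eventually_nhds_conv_at)
    then show ?thesis by eventually_elim (simp add: ZV)
  qed
  have d2: "((\<lambda>y. Z y $ Inr j) has_derivative (\<lambda>v. 0)) (at x)"
    by (rule has_derivative_transform_eventually[OF has_derivative_const ev]) (simp_all add: ZV V)
  have "(\<lambda>v. D v $ Inr j) = (\<lambda>v. 0)" by (rule has_derivative_unique[OF d1 d2])
  then show ?thesis by metis
qed

lemma jacobian_block:
  fixes a :: "(('a::finite + 'b::finite) \<Rightarrow> nat) \<Rightarrow> complex^('a + 'b)"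
  assumes detJ: "det ((\<chi> i j. a (unit_mi j) $ i) :: complex^('a+'b)^('a+'b)) \<noteq> 0"
    and C0: "\<And>i j. a (unit_mi (Inl i)) $ Inr j = 0"
  shows "det ((\<chi> i j. a (ext_mi (unit_mi j)) $ Inl i) :: complex^'a^'a) \<noteq> 0"
proof -
  define J where "J = ((\<chi> i j. a (unit_mi j) $ i) :: complex^('a+'b)^('a+'b))"
  define A where "A = ((\<chi> i j. a (ext_mi (unit_mi j)) $ Inl i) :: complex^'a^'a)"
  have eu: "(ext_mi (unit_mi j) :: 'a + 'b \<Rightarrow> nat) = unit_mi (Inl j)" for j
    by (auto simp: ext_mi_def unit_mi_def fun_eq_iff split: sum.splits)
  have injJ: "inj ((*v) J)"
    using det_nz_iff_inj_gen[OF matrix_vector_mul_linear_gen[of J]] detJ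
    by (simp add: J_def matrix_of_matrix_vector_mul)
  have "inj ((*v) A)"
  proof (rule injI)
    fix x y :: "complex^'a" assume xy: "A *v x = A *v y"
    define v where "v = x - y"
    have Av: "A *v v = 0" using xy by (simp add: v_def matrix_vector_mult_diff_distrib)
    define v' where "v' = ((\<chi> s. case s of Inl i \<Rightarrow> v $ i | Inr _ \<Rightarrow> 0) :: complex^('a+'b))"
    have "J *v v' = 0"
    proof (subst vec_eq_iff, intro allI)
      fix s :: "'a + 'b"
      have "(J *v v') $ s = (\<Sum>i\<in>UNIV. a (unit_mi (Inl i)) $ s * v $ i)"
        by (simp add: matrix_vector_mult_def J_def v'_def sum_UNIV_Plus)
      also have "\<dots> = 0"
      proof (cases s)
        case (Inl i')
        have "(\<Sum>i\<in>UNIV. a (unit_mi (Inl i)) $ s * v $ i) = (A *v v) $ i'"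
          by (simp add: matrix_vector_mult_def A_def Inl eu)
        then show ?thesis using Av by simp
      next
        case (Inr j)
        then show ?thesis by (simp add: C0)
      qed
      finally show "(J *v v') $ s = 0 $ s" by simp
    qed
    then have "J *v v' = J *v 0" by simp
    then have "v' = 0" using injJ by (meson injD)
    then have "v = 0" by (auto simp: vec_eq_iff v'_def dest: spec[of _ "Inl _"])
    then show "x = y" by (simp add: v_def)
  qed
  then show ?thesis
    using det_nz_iff_inj_gen[OF matrix_vector_mul_linear_gen[of A]]
    by (simp add: A_def matrix_of_matrix_vector_mul)
qed

theorem lemma4p4:
  fixes M1 M1' :: "(complex^'a::finite) set"
    and a :: "(('a + 'b::finite) \<Rightarrow> nat) \<Rightarrow> complex^('a + 'b)"
    and k :: nat
  assumes "generic_submanifold TYPE('d::finite) M1"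
    and "generic_submanifold TYPE('d) M1'"
    and "CARD('p::finite) + CARD('d) = 2 * CARD('a)"
    and "CARD('e::finite) = CARD('d) + 2 * CARD('b)"
    and "1 < k"
    and "k_equiv TYPE('p) TYPE('e) (emb ` M1) (emb ` M1') a k"
  shows "(\<forall>\<beta> j. sum \<beta> UNIV < k \<longrightarrow> a (ext_mi \<beta>) $ Inr j = 0)
       \<and> k_equiv TYPE('p) TYPE('d) M1 M1' (\<lambda>\<beta>. \<chi> i. a (ext_mi \<beta>) $ Inl i) k"
proof -
  obtain Z :: "real^'p \<Rightarrow> complex^('a + 'b)" and \<rho>' :: "complex^('a + 'b) \<Rightarrow> real^'e"
    where inv: "invertible_formal_map a" and par: "parametrization (emb ` M1) Z"
      and ldf: "local_defining_function (emb ` M1') \<rho>'"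
      and big: "bigO_pow (\<lambda>x. \<rho>' (trunc_map a k (Z x))) k"
    using assms(6) unfolding k_equiv_def by blast
  obtain V W g where Z0: "Z 0 = 0" and V: "open V" "0 \<in> V" and W: "open W" "0 \<in> W"
    and anZ: "real_analytic_map_on Z V" and hom: "homeomorphism V (emb ` M1 \<inter> W) Z g"
    and injd: "\<forall>x\<in>V. inj (frechet_derivative Z (at x))"
    using par unfolding parametrization_def by blast
  obtain U' where U': "open U'" "0 \<in> U'" and an\<rho>': "real_analytic_map_on \<rho>' U'"
    and zU': "emb ` M1' \<inter> U' = {Z\<in>U'. \<rho>' Z = 0}"
    and indU': "\<forall>Z\<in>emb ` M1' \<inter> U'. \<forall>c :: 'e \<Rightarrow> real.
        (\<forall>v. (\<Sum>j\<in>UNIV. c j * frechet_derivative (\<lambda>W. \<rho>' W $ j) (at Z) v) = 0) \<longrightarrow> (\<forall>j. c j = 0)"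
    using ldf unfolding local_defining_function_def defining_function_on_def by blast
  obtain \<rho>1 :: "complex^'a \<Rightarrow> real^'d" and U1 where M10: "0 \<in> M1"
    and U1: "open U1" "0 \<in> U1" and an\<rho>1: "real_analytic_map_on \<rho>1 U1"
    and zU1: "M1 \<inter> U1 = {Z\<in>U1. \<rho>1 Z = 0}"
    and indU1: "\<forall>Z\<in>M1 \<inter> U1. \<forall>c :: 'd \<Rightarrow> real.
        (\<forall>v. (\<Sum>j\<in>UNIV. c j * frechet_derivative (\<lambda>W. \<rho>1 W $ j) (at Z) v) = 0) \<longrightarrow> (\<forall>j. c j = 0)"
    and gen1: "\<forall>Z\<in>M1 \<inter> U1. \<forall>c :: 'd \<Rightarrow> complex.
           (\<Sum>j\<in>UNIV. c j *s cgrad (\<lambda>W. \<rho>1 W $ j) Z) = 0 \<longrightarrow> (\<forall>j. c j = 0)"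
    using assms(1) unfolding generic_submanifold_def defining_function_on_def by blast
  obtain \<rho>2 :: "complex^'a \<Rightarrow> real^'d" and U2 where M1'0: "0 \<in> M1'"
    and dU2: "defining_function_on M1' \<rho>2 U2"
    using assms(2) unfolding generic_submanifold_def by blast
  then have U2: "open U2" "0 \<in> U2" and an\<rho>2: "real_analytic_map_on \<rho>2 U2"
    and zU2: "M1' \<inter> U2 = {Z\<in>U2. \<rho>2 Z = 0}"
    unfolding defining_function_on_def by blast+
  from hom have homd: "\<forall>x\<in>V. g (Z x) = x" "Z ` V = emb ` M1 \<inter> W" "continuous_on V Z"
      "\<forall>y\<in>emb ` M1 \<inter> W. Z (g y) = y" "g ` (emb ` M1 \<inter> W) = V" "continuous_on (emb ` M1 \<inter> W) g"
    unfolding homeomorphism_def by blast+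
  define Z1 where "Z1 x = proj1 (Z x)" for x
  have ZV: "Z x = emb (Z1 x)" "Z1 x \<in> M1" if "x \<in> V" for x
  proof -
    have "Z x \<in> emb ` M1" using homd(2) that by blast
    then obtain z where z: "z \<in> M1" "Z x = emb z" by blast
    then show "Z x = emb (Z1 x)" "Z1 x \<in> M1" by (simp_all add: Z1_def)
  qed
  have ZVr: "Z x $ Inr j = 0" if "x \<in> V" for x j using ZV[OF that] by simp
  have bl_proj1: "bounded_linear proj1" using linear_proj1 linear_conv_bounded_linear by blast
  (* derivative of Z at 0, strict *)
  obtain LZ KZ \<delta>Z where linLZ: "linear LZ" and dZ0: "0 < \<delta>Z" and KZ0: "0 \<le> KZ"
    and strZ: "\<forall>t u v. 0 < t \<longrightarrow> t \<le> \<delta>Z \<longrightarrow> norm (u - 0) \<le> t \<longrightarrow> norm (v - 0) \<le> t \<longrightarrow>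
        norm (Z u - Z v - LZ (u - v)) \<le> KZ * t * norm (u - v)"
    using analytic_map_strict[OF anZ V(2)] by blast
  have derZ: "(Z has_derivative LZ) (at 0)" by (rule strict_imp_deriv[OF linLZ dZ0 KZ0 strZ])
  define L1 where "L1 v = proj1 (LZ v)" for v
  have LZemb: "LZ v = emb (L1 v)" for v
    unfolding L1_def by (rule emb_proj1[symmetric]) (use deriv_Inr_zero[OF derZ V ZVr] in auto)
  have linL1: "linear L1" unfolding L1_def using linear_compose[OF linLZ linear_proj1] by (simp add: comp_def)
  have injL1: "inj L1"
  proof -
    have "inj LZ" using injd V(2) frechet_derivative_at[OF derZ] by simp
    then show ?thesis by (metis LZemb injD injI)
  qed
  have strZ1: "\<forall>y. norm y \<le> \<delta>Z \<longrightarrow> norm (Z1 y - L1 y) \<le> KZ * norm y ^ 2"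
  proof (intro allI impI)
    fix y :: "real^'p" assume y: "norm y \<le> \<delta>Z"
    show "norm (Z1 y - L1 y) \<le> KZ * norm y ^ 2"
    proof (cases "y = 0")
      case True
      have "Z1 y = 0" unfolding True Z1_def Z0 by (simp add: proj1_def vec_eq_iff)
      moreover have "L1 y = 0" using linL1 True by (simp add: linear_0)
      ultimately show ?thesis using KZ0 by simp
    next
      case False
      have "norm (Z y - Z 0 - LZ (y - 0)) \<le> KZ * norm y * norm (y - 0)"
        using strZ[rule_format, of "norm y" y 0] False y by simp
      then have "norm (Z y - LZ y) \<le> KZ * norm y ^ 2" using Z0 by (simp add: power2_eq_square)
      moreover have "norm (Z1 y - L1 y) \<le> norm (Z y - LZ y)"
        using norm_proj1[of "Z y - LZ y"] by (simp add: Z1_def L1_def proj1_diff)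
      ultimately show ?thesis by linarith
    qed
  qed
  have derZ1: "(Z1 has_derivative L1) (at 0)"
    unfolding Z1_def[abs_def] L1_def[abs_def] by (rule bounded_linear.has_derivative[OF bl_proj1 derZ])
  have Z10: "Z1 0 = 0" using Z0 by (simp add: Z1_def proj1_def vec_eq_iff)
  (* span property via genericity of M1 *)
  obtain L\<rho>1 where der\<rho>1: "(\<rho>1 has_derivative L\<rho>1) (at 0)" and linL\<rho>1: "linear L\<rho>1"
    using strict_deriv_ex[OF an\<rho>1 U1(2)] by blast
  have fr1: "frechet_derivative (\<lambda>W. \<rho>1 W $ j) (at 0) = (\<lambda>v. L\<rho>1 v $ j)" for j
    by (rule coord_frechet[OF der\<rho>1])
  have M1U1: "0 \<in> M1 \<inter> U1" using M10 U1 by simp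
  have span1: "\<forall>w. \<exists>x y. w = L1 x + \<i> *s L1 y"
  proof (rule span_lemma[OF linL1 injL1 assms(3), of "\<lambda>j v. L\<rho>1 v $ j" "\<lambda>j. cgrad (\<lambda>W. \<rho>1 W $ j) 0"])
    show "linear (\<lambda>v. L\<rho>1 v $ j)" for j
      using linL\<rho>1 unfolding linear_conv_bounded_linear
      by (rule bounded_linear_compose[OF bounded_linear_vec_nth])
    show "\<forall>j. c j = 0" if "\<forall>v. (\<Sum>j\<in>UNIV. c j * L\<rho>1 v $ j) = 0" for c :: "'d \<Rightarrow> real"
      using indU1 M1U1 that by (simp add: fr1)
    show "\<forall>j. c j = 0" if "(\<Sum>j\<in>UNIV. c j *s cgrad (\<lambda>W. \<rho>1 W $ j) 0) = 0" for c :: "'d \<Rightarrow> complex"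
      using gen1 M1U1 that by blast
    show "cgrad (\<lambda>W. \<rho>1 W $ j) 0 = (\<chi> l. (complex_of_real (L\<rho>1 (axis l 1) $ j) - \<i> * complex_of_real (L\<rho>1 (axis l \<i>) $ j)) / 2)" for j
      by (simp add: cgrad_def fr1)
    show "L\<rho>1 (L1 x) $ j = 0" for x j
    proof -
      have d1: "(\<rho>1 \<circ> Z1 has_derivative L\<rho>1 \<circ> L1) (at 0)"
        by (rule diff_chain_at[OF derZ1]) (simp add: Z10 der\<rho>1)
      have "(Z1 \<longlongrightarrow> Z1 0) (at 0)"
        using has_derivative_continuous[OF derZ1] by (simp add: continuous_at)
      then have "\<forall>\<^sub>F y in at 0. Z1 y \<in> U1" using U1 Z10 by (intro topological_tendstoD) auto
      moreover have "\<forall>\<^sub>F y in at 0. y \<in> V"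
        using eventually_nhds_in_open[OF V] by (simp add: eventually_nhds_conv_at)
      ultimately have ev: "\<forall>\<^sub>F y in at 0. (\<rho>1 \<circ> Z1) y = 0"
      proof eventually_elim
        case (elim y)
        then have "Z1 y \<in> M1 \<inter> U1" using ZV by auto
        then show ?case using zU1 by auto
      qed
      have "(\<rho>1 \<circ> Z1) 0 = 0" using M1U1 zU1 Z10 by auto
      then have d2: "(\<rho>1 \<circ> Z1 has_derivative (\<lambda>_. 0)) (at 0)"
        using has_derivative_transform_eventually[OF has_derivative_const[of 0 "at 0"], of "\<rho>1 \<circ> Z1"] ev
        by (auto simp: eventually_mono)
      have "L\<rho>1 \<circ> L1 = (\<lambda>_. 0)" by (rule has_derivative_unique[OF d1 d2])
      then show ?thesis by (metis comp_apply zero_index)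
    qed
  qed

  (* metric regularity for rho' *)
  obtain Lp Kp \<delta>p where linLp: "linear Lp" and dp0: "0 < \<delta>p" and Kp0: "0 \<le> Kp"
    and strp: "\<forall>t u v. 0 < t \<longrightarrow> t \<le> \<delta>p \<longrightarrow> norm (u - 0) \<le> t \<longrightarrow> norm (v - 0) \<le> t \<longrightarrow>
        norm (\<rho>' u - \<rho>' v - Lp (u - v)) \<le> Kp * t * norm (u - v)"
    using analytic_map_strict[OF an\<rho>' U'(2)] by blast
  have derp: "(\<rho>' has_derivative Lp) (at 0)" by (rule strict_imp_deriv[OF linLp dp0 Kp0 strp])
  have M'U': "0 \<in> emb ` M1' \<inter> U'" using imageI[OF M1'0, of emb] U'(2) by simp
  have \<rho>'0: "\<rho>' 0 = 0" using M'U' zU' by auto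
  have surjLp: "surj Lp"
  proof (rule surj_from_orth[OF linLp])
    fix c :: "real^'e" assume c: "\<forall>v. c \<bullet> Lp v = 0"
    have "\<forall>v. (\<Sum>j\<in>UNIV. c $ j * frechet_derivative (\<lambda>W. \<rho>' W $ j) (at 0) v) = 0"
      using c by (simp add: coord_frechet[OF derp] inner_vec_def)
    then have "\<forall>j. c $ j = 0" using indU'[rule_format, OF M'U', of "\<lambda>j. c $ j"] by simp
    then show "c = 0" by (simp add: vec_eq_iff)
  qed
  obtain C0 where C0: "\<forall>\<epsilon>>0. \<exists>\<eta>>0. \<forall>w. norm w < \<eta> \<longrightarrow>
           (\<exists>m. \<rho>' m = 0 \<and> norm (m - w) \<le> C0 * norm (\<rho>' w) \<and> norm m < \<epsilon>)"
    using metric_regularity[OF linLp surjLp \<rho>'0 dp0 Kp0 strp] by blast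
  (* Lipschitz for rho2 *)
  obtain L2 K2 \<delta>2 where linL2: "linear L2" and d20: "0 < \<delta>2" and K20: "0 \<le> K2"
    and str2: "\<forall>t u v. 0 < t \<longrightarrow> t \<le> \<delta>2 \<longrightarrow> norm (u - 0) \<le> t \<longrightarrow> norm (v - 0) \<le> t \<longrightarrow>
        norm (\<rho>2 u - \<rho>2 v - L2 (u - v)) \<le> K2 * t * norm (u - v)"
    using analytic_map_strict[OF an\<rho>2 U2(2)] by blast
  obtain Lip where Lip: "\<forall>u v. norm (u - 0) \<le> \<delta>2 \<longrightarrow> norm (v - 0) \<le> \<delta>2 \<longrightarrow> norm (\<rho>2 u - \<rho>2 v) \<le> Lip * norm (u - v)"
    using strict_lipschitz[OF linL2 d20 K20 str2] by blast
  obtain eU' where eU': "eU' > 0" "ball 0 eU' \<subseteq> U'" using open_contains_ball_eq[OF U'(1)] U'(2) by blast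
  obtain eU2 where eU2: "eU2 > 0" "ball 0 eU2 \<subseteq> U2" using open_contains_ball_eq[OF U2(1)] U2(2) by blast
  define \<epsilon> where "\<epsilon> = min (min eU' eU2) \<delta>2"
  have e0: "\<epsilon> > 0" using eU' eU2 d20 by (simp add: \<epsilon>_def)
  obtain \<eta> where eta0: "\<eta> > 0" and eta: "\<forall>w. norm w < \<eta> \<longrightarrow>
           (\<exists>m. \<rho>' m = 0 \<and> norm (m - w) \<le> C0 * norm (\<rho>' w) \<and> norm m < \<epsilon>)"
    using C0 e0 by blast
  obtain Cb where Cb: "\<forall>\<^sub>F x in nhds 0. norm (\<rho>' (trunc_map a k (Z x))) \<le> Cb * norm x ^ k"
    using big unfolding bigO_pow_def by blast
  define wx where "wx x = trunc_map a k (Z x)" for x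
  have wx0: "wx 0 = 0" using Z0 trunc_0[OF inv] by (simp add: wx_def)
  have "(Z \<longlongrightarrow> Z 0) (at 0)" using has_derivative_continuous[OF derZ] by (simp add: continuous_at)
  then have "(wx \<longlongrightarrow> wx 0) (at 0)" unfolding wx_def by (rule trunc_tendsto)
  then have "\<forall>\<^sub>F x in at 0. dist (wx x) 0 < min \<eta> \<delta>2" using wx0 eta0 d20 by (intro tendstoD) auto
  then have evw: "\<forall>\<^sub>F x in nhds 0. norm (wx x) < min \<eta> \<delta>2"
    using wx0 eta0 d20 by (simp add: eventually_nhds_conv_at)
  have key: "\<exists>m1. m1 \<in> M1' \<and> norm m1 \<le> \<delta>2 \<and> \<rho>2 m1 = 0 \<and> norm (wx x - emb m1) \<le> \<bar>C0\<bar> * Cb * norm x ^ k"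
    if x: "x \<in> V" "norm (\<rho>' (wx x)) \<le> Cb * norm x ^ k" "norm (wx x) < min \<eta> \<delta>2" for x
  proof -
    obtain m where m: "\<rho>' m = 0" "norm (m - wx x) \<le> C0 * norm (\<rho>' (wx x))" "norm m < \<epsilon>"
    proof -
      have "norm (wx x) < \<eta>" using x(3) by simp
      then show ?thesis using eta that by blast
    qed
    have "m \<in> U'" using m(3) eU' by (auto simp: \<epsilon>_def)
    then have "m \<in> emb ` M1' \<inter> U'" using zU' m(1) by blast
    then obtain m1 where m1: "m1 \<in> M1'" "m = emb m1" by blast
    have nm1: "norm m1 \<le> norm m" using norm_proj1[of m] m1 by simp
    then have "m1 \<in> U2" using m(3) eU2 by (auto simp: \<epsilon>_def)
    then have "\<rho>2 m1 = 0" using zU2 m1(1) by blast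
    moreover have "norm m1 \<le> \<delta>2" using nm1 m(3) by (simp add: \<epsilon>_def)
    moreover have "norm (wx x - emb m1) \<le> \<bar>C0\<bar> * Cb * norm x ^ k"
    proof -
      have "norm (wx x - emb m1) = norm (m - wx x)" using m1 by (simp add: norm_minus_commute)
      also have "\<dots> \<le> C0 * norm (\<rho>' (wx x))" by (rule m(2))
      also have "\<dots> \<le> \<bar>C0\<bar> * norm (\<rho>' (wx x))" by (simp add: mult_right_mono)
      also have "\<dots> \<le> \<bar>C0\<bar> * (Cb * norm x ^ k)" using x(2) by (simp add: mult_left_mono)
      finally show ?thesis by (simp add: mult.assoc)
    qed
    ultimately show ?thesis using m1 by blast
  qed
  have evall: "\<forall>\<^sub>F x in nhds 0. x \<in> V \<and> norm (\<rho>' (wx x)) \<le> Cb * norm x ^ k \<and> norm (wx x) < min \<eta> \<delta>2"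
  proof -
    have Cb': "\<forall>\<^sub>F x in nhds 0. norm (\<rho>' (wx x)) \<le> Cb * norm x ^ k" using Cb unfolding wx_def .
    show ?thesis by (intro eventually_conj eventually_nhds_in_open V Cb' evw)
  qed
  (* Part 1 *)
  have part1j: "\<forall>\<beta>. sum \<beta> UNIV < k \<longrightarrow> a (ext_mi \<beta>) $ Inr j = 0" for j :: 'b
  proof -
    have bigj: "\<forall>\<^sub>F x in nhds 0. norm (\<Sum>\<beta>\<in>{\<beta>. sum \<beta> UNIV < k}. a (ext_mi \<beta>) $ Inr j * monom \<beta> (Z1 x))
          \<le> (\<bar>C0\<bar> * Cb) * norm x ^ k"
      using evall
    proof eventually_elim
      case (elim x)
      have "\<exists>m1. m1 \<in> M1' \<and> norm m1 \<le> \<delta>2 \<and> \<rho>2 m1 = 0 \<and> norm (wx x - emb m1) \<le> \<bar>C0\<bar> * Cb * norm x ^ k"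
        by (rule key) (use elim in auto)
      then obtain m1 where m1: "norm (wx x - emb m1) \<le> \<bar>C0\<bar> * Cb * norm x ^ k" by blast
      have "(\<Sum>\<beta>\<in>{\<beta>. sum \<beta> UNIV < k}. a (ext_mi \<beta>) $ Inr j * monom \<beta> (Z1 x)) = wx x $ Inr j"
      proof -
        have ZZ: "Z x = emb (Z1 x)" using ZV(1) elim by blast
        show ?thesis by (simp only: wx_def ZZ trunc_emb)
      qed
      also have "\<dots> = (wx x - emb m1) $ Inr j" by simp
      finally have eq: "(\<Sum>\<beta>\<in>{\<beta>. sum \<beta> UNIV < k}. a (ext_mi \<beta>) $ Inr j * monom \<beta> (Z1 x)) = (wx x - emb m1) $ Inr j" .
      have "norm ((wx x - emb m1) $ Inr j) \<le> norm (wx x - emb m1)" by (rule Finite_Cartesian_Product.norm_nth_le)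
      then show ?case using m1 eq by simp
    qed
    have "\<forall>\<beta>. sum \<beta> UNIV < k \<longrightarrow> a (ext_mi \<beta>) $ Inr j = 0"
      by (rule poly_vanish[OF linL1 dZ0 strZ1 span1 bigj])
    then show "\<forall>\<beta>. sum \<beta> UNIV < k \<longrightarrow> a (ext_mi \<beta>) $ Inr j = 0" .
  qed
  have part1: "\<forall>\<beta> j. sum \<beta> UNIV < k \<longrightarrow> a (ext_mi \<beta>) $ Inr j = 0" using part1j by blast
  define b where "b = (\<lambda>\<beta>. \<chi> i. a (ext_mi \<beta>) $ Inl i)"
  have bl_emb: "bounded_linear emb" using linear_emb linear_conv_bounded_linear by blast
  have invb: "invertible_formal_map b"
    unfolding invertible_formal_map_def
  proof
    have "(ext_mi (\<lambda>_. 0) :: 'a + 'b \<Rightarrow> nat) = (\<lambda>_. 0)" by (auto simp: ext_mi_def fun_eq_iff split: sum.split)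
    then show "b (\<lambda>_. 0) = 0" using inv by (simp add: b_def invertible_formal_map_def vec_eq_iff)
    have eu: "(ext_mi (unit_mi j) :: 'a + 'b \<Rightarrow> nat) = unit_mi (Inl j)" for j
      by (auto simp: ext_mi_def unit_mi_def fun_eq_iff split: sum.splits)
    have su: "sum (unit_mi j :: 'a \<Rightarrow> nat) UNIV = 1" for j by (simp add: unit_mi_def)
    have C0': "a (unit_mi (Inl i)) $ Inr j = 0" for i j
    proof -
      have "(a (ext_mi (unit_mi i)) :: complex^('a+'b)) $ Inr j = 0" using part1j[of j] su[of i] assms(5) by simp
      then show ?thesis by (simp only: eu)
    qed
    have "det ((\<chi> i j. a (ext_mi (unit_mi j)) $ Inl i) :: complex^'a^'a) \<noteq> 0"
      by (rule jacobian_block[of a, OF _ C0']) (use inv in \<open>simp add: invertible_formal_map_def\<close>)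
    then show "det ((\<chi> i j. b (unit_mi j) $ i) :: complex^'a^'a) \<noteq> 0" by (simp add: b_def)
  qed
  define W1 where "W1 = emb -` W"
  have W1: "open W1" "0 \<in> W1"
    using continuous_open_vimage[OF W(1), of emb] linear_continuous_at[OF bl_emb] W(2)
    by (auto simp: W1_def)
  have anZ1: "real_analytic_map_on Z1 V"
    unfolding real_analytic_map_on_def
  proof
    fix bb :: "complex^'a" assume "bb \<in> Basis"
    then obtain i u where iu: "bb = axis i u" "u \<in> Basis" by (auto simp: Basis_vec_def)
    have "axis (Inl i :: 'a + 'b) u \<in> Basis" using iu(2) by (auto simp: Basis_vec_def)
    then have "real_analytic_on (\<lambda>x. Z x \<bullet> axis (Inl i) u) V" using anZ by (simp add: real_analytic_map_on_def)
    moreover have "(\<lambda>x. Z1 x \<bullet> bb) = (\<lambda>x. Z x \<bullet> axis (Inl i) u)"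
      by (simp add: iu inner_axis Z1_def proj1_def)
    ultimately show "real_analytic_on (\<lambda>x. Z1 x \<bullet> bb) V" by simp
  qed
  have ZVW: "Z x \<in> emb ` M1 \<inter> W" if "x \<in> V" for x using homd(2) that by blast
  have imgeq: "emb ` (M1 \<inter> W1) = emb ` M1 \<inter> W" by (auto simp: W1_def)
  have homZ1: "homeomorphism V (M1 \<inter> W1) Z1 (g \<circ> emb)"
    unfolding homeomorphism_def
  proof (intro conjI ballI)
    show "(g \<circ> emb) (Z1 x) = x" if "x \<in> V" for x
    proof -
      have "emb (Z1 x) = Z x" using ZV(1)[OF that] by simp
      then show ?thesis using homd(1) that by simp
    qed
    show "Z1 ` V = M1 \<inter> W1"
    proof
      show "Z1 ` V \<subseteq> M1 \<inter> W1" using ZV ZVW by (auto simp: W1_def)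
      show "M1 \<inter> W1 \<subseteq> Z1 ` V"
      proof
        fix z assume z: "z \<in> M1 \<inter> W1"
        then have "emb z \<in> Z ` V" using homd(2) by (auto simp: W1_def)
        then obtain x where x: "x \<in> V" "emb z = Z x" by blast
        then have "z = Z1 x" by (metis Z1_def proj1_emb)
        then show "z \<in> Z1 ` V" using x by blast
      qed
    qed
    show "continuous_on V Z1"
      unfolding Z1_def[abs_def]
      by (rule continuous_on_compose2[OF linear_continuous_on[OF bl_proj1] homd(3)]) auto
    show "Z1 ((g \<circ> emb) y) = y" if "y \<in> M1 \<inter> W1" for y
    proof -
      have "emb y \<in> emb ` M1 \<inter> W" using that by (auto simp: W1_def)
      then have "Z (g (emb y)) = emb y" using homd(4) by blast
      then show ?thesis by (simp add: Z1_def)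
    qed
    show "(g \<circ> emb) ` (M1 \<inter> W1) = V" using homd(5) imgeq by (metis image_comp)
    show "continuous_on (M1 \<inter> W1) (g \<circ> emb)"
      by (rule continuous_on_compose[OF linear_continuous_on[OF bl_emb]]) (simp add: imgeq homd(6))
  qed
  have injZ1: "inj (frechet_derivative Z1 (at x))" if x: "x \<in> V" for x
  proof -
    obtain D where D: "(Z has_derivative D) (at x)" "linear D" using strict_deriv_ex[OF anZ x] by blast
    have injDD: "inj D" using injd x frechet_derivative_at[OF D(1)] by simp
    have Dr: "D v $ Inr j = 0" for v j by (rule deriv_Inr_zero[OF D(1) V(1) x ZVr])
    have "(Z1 has_derivative (\<lambda>v. proj1 (D v))) (at x)"
      unfolding Z1_def[abs_def] by (rule bounded_linear.has_derivative[OF bl_proj1 D(1)])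
    then have fr: "frechet_derivative Z1 (at x) = (\<lambda>v. proj1 (D v))" by (rule frechet_derivative_at[symmetric])
    have "inj (\<lambda>v. proj1 (D v))"
    proof (rule injI)
      fix u v assume "proj1 (D u) = proj1 (D v)"
      then have "emb (proj1 (D u)) = emb (proj1 (D v))" by simp
      then have "D u = D v" using emb_proj1 Dr by metis
      then show "u = v" using injDD by (meson injD)
    qed
    then show ?thesis using fr by simp
  qed
  have parZ1: "parametrization M1 Z1"
    unfolding parametrization_def
    using Z10 V W1 anZ1 homZ1 injZ1 by blast
  have ldf2: "local_defining_function M1' \<rho>2" using dU2 unfolding local_defining_function_def by blast
  have big2: "bigO_pow (\<lambda>x. \<rho>2 (trunc_map b k (Z1 x))) k"
    unfolding bigO_pow_def
  proof (intro exI[of _ "\<bar>Lip\<bar> * (\<bar>C0\<bar> * Cb)"])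
    show "\<forall>\<^sub>F x in nhds 0. norm (\<rho>2 (trunc_map b k (Z1 x))) \<le> \<bar>Lip\<bar> * (\<bar>C0\<bar> * Cb) * norm x ^ k"
      using evall
    proof eventually_elim
      case (elim x)
      have "\<exists>m1. m1 \<in> M1' \<and> norm m1 \<le> \<delta>2 \<and> \<rho>2 m1 = 0 \<and> norm (wx x - emb m1) \<le> \<bar>C0\<bar> * Cb * norm x ^ k"
        by (rule key) (use elim in auto)
      then obtain m1 where m1: "norm m1 \<le> \<delta>2" "\<rho>2 m1 = 0" "norm (wx x - emb m1) \<le> \<bar>C0\<bar> * Cb * norm x ^ k"
        by blast
      have ZZ: "Z x = emb (Z1 x)" using ZV(1) elim by blast
      have tr: "trunc_map b k (Z1 x) = proj1 (wx x)" unfolding b_def wx_def ZZ by (rule trunc_proj)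
      have nw: "norm (proj1 (wx x)) \<le> \<delta>2" using norm_proj1[of "wx x"] elim by simp
      have "norm (\<rho>2 (proj1 (wx x))) = norm (\<rho>2 (proj1 (wx x)) - \<rho>2 m1)" using m1(2) by simp
      also have "\<dots> \<le> Lip * norm (proj1 (wx x) - m1)" using Lip nw m1(1) by simp
      also have "\<dots> \<le> \<bar>Lip\<bar> * norm (proj1 (wx x) - m1)" by (simp add: mult_right_mono)
      also have "norm (proj1 (wx x) - m1) \<le> norm (wx x - emb m1)"
        using norm_proj1[of "wx x - emb m1"] by (simp add: proj1_diff)
      then have "\<bar>Lip\<bar> * norm (proj1 (wx x) - m1) \<le> \<bar>Lip\<bar> * (\<bar>C0\<bar> * Cb * norm x ^ k)"
        using m1(3) by (intro mult_left_mono) auto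
      finally show ?case using tr by (simp add: mult.assoc)
    qed
  qed
  show ?thesis
    using part1 invb parZ1 ldf2 big2 unfolding k_equiv_def b_def by blast
qed

end
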